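(* Let $\rho>0$, $Z\in A_\rho(\mathbb{C}^\ell,\mathbb{C}^d)$ with $\ell=d(N+1)$ and $Z(0)=0$, let $\boldsymbol\lambda=(\lambda_1,\ldots,\lambda_m)$ be a stable non-resonant vector of eigenvalues, $\Lambda=\mathrm{diag}(\lambda_1,\ldots,\lambda_m)$, and assume $B_0$ is non-singular. Then: (1) $D\Phi(0)$ maps $H$ into $H$ and $D\Phi(0):H\to H$ is invertible with bounded inverse; (2) if $\varphi\in H$, $\varphi(z)=\sum_{k\ge2}\sum_{|\alpha|=k}z^\alpha\varphi_\alpha$, and $\eta=D\Phi(0)^{-1}\varphi=\sum_{k\ge2}\sum_{|\alpha|=k}z^\alpha\eta_\alpha$, then $\eta_\alpha=T(\boldsymbol\lambda^\alpha)^{-1}\varphi_\alpha$ for every multi-index $\alpha$ with $|\alpha|\ge2$.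
   Context: Sup norm $\|\cdot\|_\infty$; $A_\rho(\mathbb{C}^r,\mathbb{C}^s)$ is the Banach space of $f:\{\|z\|_\infty\le\rho\}\to\mathbb{C}^s$, $f(z)=\sum_\alpha z^\alpha\eta_\alpha$, $\|f\|_\rho=\sum_k(\sum_{|\alpha|=k}\|\eta_\alpha\|_\infty)\rho^k<\infty$. $X=A_1(\mathbb{C}^m,\mathbb{C}^d)$, $\mathcal{U}=\{f\in X:\|f\|_1<\rho\}$, $[\Phi(P)](z)=Z(P(z),P(\Lambda z),\ldots,P(\Lambda^Nz))$. $H=\{P\in X: P(0)=0,\ P'(0)=0\}$, i.e. functions $\sum_{k\ge2}\sum_{|\alpha|=k}z^\alpha P_\alpha$, with the norm $\|\cdot\|_1$. $B_i=\partial_iZ(0)$ (derivative w.r.t. the $i$-th block variable), $T(\lambda)=\sum_{i=0}^N\lambda^iB_i$, $\mathcal{F}(\lambda)=\det T(\lambda)$. $\boldsymbol\lambda^\alpha=\prod\lambda_i^{\alpha_i}$. A vector $\boldsymbol\lambda=(\lambda_1,\ldots,\lambda_m)\in\mathbb{C}^m$ is a stable non-resonant vector of eigenvalues if $|\lambda_i|<1$ for all $i$, $\mathcal{F}(\lambda_i)=0$ for all $i$, and $\mathcal{F}(\boldsymbol\lambda^\alpha)\ne0$ for all $\alpha\in\mathbb{Z}_+^m$ with $|\alpha|\ge2$. *)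

theory Defs
  imports "HOL-Analysis.Analysis"
begin

text \<open>Variables are indexed by a finite
  index set I (points are functions I -> complex, coordinates outside I are ignored);
  values lie in complex^'s.\<close>

definition mindex :: "'i set \<Rightarrow> ('i \<Rightarrow> nat) set" where
  "mindex I = {\<alpha>. \<forall>i. i \<notin> I \<longrightarrow> \<alpha> i = 0}"

definition mdeg :: "'i set \<Rightarrow> ('i \<Rightarrow> nat) \<Rightarrow> nat" where
  "mdeg I \<alpha> = (\<Sum>i\<in>I. \<alpha> i)"

definition mon :: "'i set \<Rightarrow> ('i \<Rightarrow> complex) \<Rightarrow> ('i \<Rightarrow> nat) \<Rightarrow> complex" where
  "mon I z \<alpha> = (\<Prod>i\<in>I. z i ^ \<alpha> i)"

definition supv :: "complex ^ 's::finite \<Rightarrow> real" where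
  "supv v = Max (range (\<lambda>j. cmod (v $ j)))"

definition polydisc :: "real \<Rightarrow> 'i set \<Rightarrow> ('i \<Rightarrow> complex) set" where
  "polydisc \<rho> I = {z. \<forall>i\<in>I. cmod (z i) \<le> \<rho>}"

definition is_Arep :: "real \<Rightarrow> 'i set \<Rightarrow> (('i \<Rightarrow> complex) \<Rightarrow> complex ^ 's::finite)
    \<Rightarrow> (('i \<Rightarrow> nat) \<Rightarrow> complex ^ 's) \<Rightarrow> bool" where
  "is_Arep \<rho> I f c \<longleftrightarrow>
     (\<lambda>\<alpha>. supv (c \<alpha>) * \<rho> ^ mdeg I \<alpha>) summable_on mindex I \<and>
     (\<forall>z\<in>polydisc \<rho> I. ((\<lambda>\<alpha>. mon I z \<alpha> *s c \<alpha>) has_sum f z) (mindex I))"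

definition inA :: "real \<Rightarrow> 'i set \<Rightarrow> (('i \<Rightarrow> complex) \<Rightarrow> complex ^ 's::finite) \<Rightarrow> bool" where
  "inA \<rho> I f \<longleftrightarrow> (\<exists>c. is_Arep \<rho> I f c)"

definition coefA :: "real \<Rightarrow> 'i set \<Rightarrow> (('i \<Rightarrow> complex) \<Rightarrow> complex ^ 's::finite)
    \<Rightarrow> ('i \<Rightarrow> nat) \<Rightarrow> complex ^ 's" where
  "coefA \<rho> I f = (SOME c. is_Arep \<rho> I f c)"

definition normA :: "real \<Rightarrow> 'i set \<Rightarrow> (('i \<Rightarrow> complex) \<Rightarrow> complex ^ 's::finite) \<Rightarrow> real" where
  "normA \<rho> I f = infsum (\<lambda>\<alpha>. supv (coefA \<rho> I f \<alpha>) * \<rho> ^ mdeg I \<alpha>) (mindex I)"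

text \<open>The space X = A_1(C^m, C^d), with variables indexed by the finite type 'm.\<close>
abbreviation inX :: "(('m::finite \<Rightarrow> complex) \<Rightarrow> complex ^ 'd::finite) \<Rightarrow> bool" where
  "inX f \<equiv> inA 1 UNIV f"
abbreviation normX :: "(('m::finite \<Rightarrow> complex) \<Rightarrow> complex ^ 'd::finite) \<Rightarrow> real" where
  "normX f \<equiv> normA 1 UNIV f"
abbreviation coefX :: "(('m::finite \<Rightarrow> complex) \<Rightarrow> complex ^ 'd::finite) \<Rightarrow> ('m \<Rightarrow> nat) \<Rightarrow> complex ^ 'd" where
  "coefX f \<equiv> coefA 1 UNIV f"

text \<open>equality as elements of X (i.e. on the closed unit polydisc)\<close>
definition eqX :: "(('m::finite \<Rightarrow> complex) \<Rightarrow> complex ^ 'd::finite) \<Rightarrow> (('m \<Rightarrow> complex) \<Rightarrow> complex ^ 'd) \<Rightarrow> bool" where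
  "eqX f g \<longleftrightarrow> (\<forall>z\<in>polydisc 1 UNIV. f z = g z)"

text \<open>H = {P in X : P(0)=0, P'(0)=0}, i.e. all Taylor coefficients of degree <= 1 vanish\<close>
definition inH :: "(('m::finite \<Rightarrow> complex) \<Rightarrow> complex ^ 'd::finite) \<Rightarrow> bool" where
  "inH P \<longleftrightarrow> inX P \<and> (\<forall>\<alpha>. mdeg UNIV \<alpha> \<le> 1 \<longrightarrow> coefX P \<alpha> = 0)"

text \<open>The map Phi: [Phi(P)](z) = Z(P(z), P(Lambda z), ..., P(Lambda^N z)); the input of Z is
  indexed by (i, j) with block i in {0..N} and component j.\<close>
definition Phi :: "nat \<Rightarrow> ('m::finite \<Rightarrow> complex) \<Rightarrow> ((nat \<times> 'd::finite \<Rightarrow> complex) \<Rightarrow> complex ^ 'd)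
    \<Rightarrow> (('m \<Rightarrow> complex) \<Rightarrow> complex ^ 'd) \<Rightarrow> (('m \<Rightarrow> complex) \<Rightarrow> complex ^ 'd)" where
  "Phi N lam Z P = (\<lambda>z. Z (\<lambda>(i, j). if i \<le> N then P (\<lambda>k. lam k ^ i * z k) $ j else 0))"

definition bounded_linX :: "((('m::finite \<Rightarrow> complex) \<Rightarrow> complex ^ 'd::finite) \<Rightarrow> (('m \<Rightarrow> complex) \<Rightarrow> complex ^ 'd)) \<Rightarrow> bool" where
  "bounded_linX L \<longleftrightarrow>
     (\<forall>f. inX f \<longrightarrow> inX (L f)) \<and>
     (\<forall>f g. inX f \<longrightarrow> inX g \<longrightarrow> eqX (L (\<lambda>z. f z + g z)) (\<lambda>z. L f z + L g z)) \<and>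
     (\<forall>c f. inX f \<longrightarrow> eqX (L (\<lambda>z. c *s f z)) (\<lambda>z. c *s L f z)) \<and>
     (\<exists>C. \<forall>f. inX f \<longrightarrow> normX (L f) \<le> C * normX f)"

definition is_DPhi0 :: "((('m::finite \<Rightarrow> complex) \<Rightarrow> complex ^ 'd::finite) \<Rightarrow> (('m \<Rightarrow> complex) \<Rightarrow> complex ^ 'd))
    \<Rightarrow> ((('m \<Rightarrow> complex) \<Rightarrow> complex ^ 'd) \<Rightarrow> (('m \<Rightarrow> complex) \<Rightarrow> complex ^ 'd)) \<Rightarrow> bool" where
  "is_DPhi0 \<Phi> L \<longleftrightarrow> bounded_linX L \<and>
     (\<forall>\<epsilon>>0. \<exists>\<delta>>0. \<forall>h. inX h \<and> normX h < \<delta> \<longrightarrow>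
        normX (\<lambda>z. \<Phi> h z - \<Phi> (\<lambda>_. 0) z - L h z) \<le> \<epsilon> * normX h)"

definition inverse_on_H :: "((('m::finite \<Rightarrow> complex) \<Rightarrow> complex ^ 'd::finite) \<Rightarrow> (('m \<Rightarrow> complex) \<Rightarrow> complex ^ 'd))
    \<Rightarrow> ((('m \<Rightarrow> complex) \<Rightarrow> complex ^ 'd) \<Rightarrow> (('m \<Rightarrow> complex) \<Rightarrow> complex ^ 'd)) \<Rightarrow> bool" where
  "inverse_on_H L M \<longleftrightarrow>
     (\<forall>\<phi>. inH \<phi> \<longrightarrow> inH (M \<phi>) \<and> eqX (L (M \<phi>)) \<phi>) \<and>
     (\<forall>P. inH P \<longrightarrow> eqX (M (L P)) P)"

text \<open>B_i = partial derivative of Z at 0 w.r.t. the i-th block variable (a d x d matrix):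
  entry (j,k) is the derivative of the j-th component of Z along the (i,k)-th coordinate.\<close>
definition Bmat :: "((nat \<times> 'd::finite \<Rightarrow> complex) \<Rightarrow> complex ^ 'd) \<Rightarrow> nat \<Rightarrow> complex ^ 'd ^ 'd" where
  "Bmat Z i = (\<chi> j k. deriv (\<lambda>t. Z (\<lambda>x. if x = (i, k) then t else 0) $ j) 0)"

definition Tmat :: "nat \<Rightarrow> ((nat \<times> 'd::finite \<Rightarrow> complex) \<Rightarrow> complex ^ 'd) \<Rightarrow> complex \<Rightarrow> complex ^ 'd ^ 'd" where
  "Tmat N Z \<mu> = (\<chi> j k. \<Sum>i\<le>N. \<mu> ^ i * Bmat Z i $ j $ k)"

definition charF :: "nat \<Rightarrow> ((nat \<times> 'd::finite \<Rightarrow> complex) \<Rightarrow> complex ^ 'd) \<Rightarrow> complex \<Rightarrow> complex" where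
  "charF N Z \<mu> = det (Tmat N Z \<mu>)"

definition lampow :: "('m::finite \<Rightarrow> complex) \<Rightarrow> ('m \<Rightarrow> nat) \<Rightarrow> complex" where
  "lampow lam \<alpha> = (\<Prod>i\<in>UNIV. lam i ^ \<alpha> i)"

definition stable_nonresonant :: "nat \<Rightarrow> ((nat \<times> 'd::finite \<Rightarrow> complex) \<Rightarrow> complex ^ 'd)
    \<Rightarrow> ('m::finite \<Rightarrow> complex) \<Rightarrow> bool" where
  "stable_nonresonant N Z lam \<longleftrightarrow>
     (\<forall>i. cmod (lam i) < 1) \<and> (\<forall>i. charF N Z (lam i) = 0) \<and>
     (\<forall>\<alpha>. mdeg UNIV \<alpha> \<ge> 2 \<longrightarrow> charF N Z (lampow lam \<alpha>) \<noteq> 0)"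

end

theory Submission
  imports Defs
begin

lemma mindex_UNIV[simp]: "mindex (UNIV::'i set) = UNIV"
  by (auto simp: mindex_def)

lemma polydisc_iff: "z \<in> polydisc r I \<longleftrightarrow> (\<forall>i\<in>I. cmod (z i) \<le> r)"
  by (simp add: polydisc_def)

lemma cmod_nth_le_supv: "cmod (v $ j) \<le> supv v"
  unfolding supv_def by (rule Max_ge) auto

lemma supv_nonneg: "0 \<le> supv v"
  using cmod_nth_le_supv[of v] norm_ge_zero order_trans by blast

lemma supv_le_norm: "supv (v::complex^'s::finite) \<le> norm v"
  unfolding supv_def by (subst Max_le_iff) (auto intro: Finite_Cartesian_Product.norm_nth_le)

lemma norm_le_sum_nth: "norm (v::complex^'s::finite) \<le> (\<Sum>j\<in>UNIV. cmod (v $ j))"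
  by (simp add: norm_vec_def L2_set_le_sum)

lemma norm_le_supv: "norm (v::complex^'s::finite) \<le> real CARD('s) * supv v"
proof -
  have "norm v \<le> (\<Sum>j\<in>UNIV. cmod (v $ j))" by (rule norm_le_sum_nth)
  also have "\<dots> \<le> (\<Sum>j\<in>(UNIV::'s set). supv v)" by (rule sum_mono) (rule cmod_nth_le_supv)
  also have "\<dots> = real CARD('s) * supv v" by simp
  finally show ?thesis .
qed

lemma mon_bound:
  assumes "\<forall>i\<in>I. cmod (z i) \<le> 1"
  shows "cmod (mon I z \<alpha>) \<le> 1"
  unfolding mon_def prod_norm[symmetric]
  by (rule prod_le_1) (auto simp: norm_power assms power_le_one)

definition xrep :: "(('m::finite \<Rightarrow> nat) \<Rightarrow> complex ^ 'd::finite) \<Rightarrow> (('m \<Rightarrow> complex) \<Rightarrow> complex ^ 'd) \<Rightarrow> bool" where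
  "xrep c f \<longleftrightarrow> (\<lambda>\<alpha>. norm (c \<alpha>)) summable_on UNIV \<and>
     (\<forall>z. (\<forall>i. cmod (z i) \<le> 1) \<longrightarrow> ((\<lambda>\<alpha>. mon UNIV z \<alpha> *s c \<alpha>) has_sum f z) UNIV)"

lemma supv_summable_iff:
  "(\<lambda>\<alpha>. supv (c \<alpha> :: complex^'d::finite)) summable_on A \<longleftrightarrow> (\<lambda>\<alpha>. norm (c \<alpha>)) summable_on A"
proof
  assume "(\<lambda>\<alpha>. supv (c \<alpha>)) summable_on A"
  then have "(\<lambda>\<alpha>. real CARD('d) * supv (c \<alpha>)) summable_on A" by (rule summable_on_cmult_right)
  then show "(\<lambda>\<alpha>. norm (c \<alpha>)) summable_on A"
    by (rule summable_on_comparison_test) (auto simp: norm_le_supv)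
next
  assume "(\<lambda>\<alpha>. norm (c \<alpha>)) summable_on A"
  then show "(\<lambda>\<alpha>. supv (c \<alpha>)) summable_on A"
    by (rule summable_on_comparison_test) (auto simp: supv_le_norm supv_nonneg)
qed

lemma is_Arep_X: "is_Arep 1 UNIV f c \<longleftrightarrow> xrep c f"
  by (simp add: is_Arep_def xrep_def supv_summable_iff polydisc_def)

lemma has_sum_sum_fin:
  fixes f :: "'a \<Rightarrow> 'b \<Rightarrow> 'c::topological_comm_monoid_add"
  assumes "finite S" "\<And>j. j \<in> S \<Longrightarrow> (f j has_sum s j) A"
  shows "((\<lambda>x. \<Sum>j\<in>S. f j x) has_sum (\<Sum>j\<in>S. s j)) A"
  using assms
proof (induction S rule: finite_induct)
  case empty then show ?case by (simp add: has_sum_0)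
next
  case (insert j S)
  then show ?case by (simp add: has_sum_add)
qed

lemma geo_root:
  assumes K: "K \<ge> (1::nat)"
  shows "(\<Sum>t<K. exp (2 * of_real pi * \<i> / of_nat K) ^ (t * n)) = (if K dvd n then of_nat K else 0)"
proof -
  define \<omega> where "\<omega> = exp (2 * of_real pi * \<i> / of_nat K)"
  have pw: "\<omega> ^ j = exp (2 * of_real pi * \<i> * of_nat j / of_nat K)" for j
    unfolding \<omega>_def exp_of_nat_mult[symmetric] by (simp add: field_simps)
  have eq1: "\<omega> ^ n = 1 \<longleftrightarrow> K dvd n"
    unfolding pw using complex_root_unity_eq_1[OF K] by simp
  have K1: "\<omega> ^ K = 1" unfolding pw using K by simp
  have "(\<Sum>t<K. \<omega> ^ (t * n)) = (\<Sum>t<K. (\<omega> ^ n) ^ t)"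
    by (simp add: power_mult[symmetric] mult.commute)
  also have "\<dots> = (if K dvd n then of_nat K else 0)"
  proof (cases "K dvd n")
    case True then show ?thesis using eq1 by simp
  next
    case False
    then have "\<omega> ^ n \<noteq> 1" using eq1 by simp
    then have "(\<Sum>t<K. (\<omega> ^ n) ^ t) = ((\<omega> ^ n) ^ K - 1) / (\<omega> ^ n - 1)"
      by (rule geometric_sum)
    also have "(\<omega> ^ n) ^ K = 1" by (simp add: power_mult[symmetric] mult.commute power_mult K1)
    finally show ?thesis using False by simp
  qed
  finally show ?thesis unfolding \<omega>_def .
qed

lemma uniq_scalar:
  fixes a :: "('m::finite \<Rightarrow> nat) \<Rightarrow> complex"
  assumes sa: "(\<lambda>\<alpha>. norm (a \<alpha>)) summable_on UNIV"
    and z0: "\<And>z. (\<forall>i. cmod (z i) \<le> 1) \<Longrightarrow> ((\<lambda>\<alpha>. mon UNIV z \<alpha> * a \<alpha>) has_sum 0) UNIV"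
  shows "a \<alpha>0 = 0"
proof -
  have asum: "a summable_on UNIV" using sa by (rule abs_summable_summable)
  have main: "cmod (a \<alpha>0) \<le> e" if e: "e > 0" for e
  proof -
    obtain F where F: "finite F" "dist (sum (\<lambda>\<alpha>. norm (a \<alpha>)) F) (infsum (\<lambda>\<alpha>. norm (a \<alpha>)) UNIV) \<le> e"
      using infsum_finite_approximation[OF sa e] by auto
    have sF: "(\<lambda>\<alpha>. norm (a \<alpha>)) summable_on (-F)" using sa by (rule summable_on_subset) auto
    have "infsum (\<lambda>\<alpha>. norm (a \<alpha>)) UNIV = infsum (\<lambda>\<alpha>. norm (a \<alpha>)) (F \<union> -F)" by simp
    also have "\<dots> = sum (\<lambda>\<alpha>. norm (a \<alpha>)) F + infsum (\<lambda>\<alpha>. norm (a \<alpha>)) (-F)"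
      by (subst infsum_Un_disjoint) (use F sF in auto)
    finally have tail: "infsum (\<lambda>\<alpha>. norm (a \<alpha>)) (-F) \<le> e"
      using F(2) by (simp add: dist_real_def)
    define K where "K = Suc (Max ((\<lambda>(\<alpha>,i). \<alpha> i) ` (insert \<alpha>0 F \<times> (UNIV::'m set))))"
    have Kgt: "\<alpha> i < K" if "\<alpha> \<in> insert \<alpha>0 F" for \<alpha> i
    proof -
      have "\<alpha> i \<le> Max ((\<lambda>(\<alpha>,i). \<alpha> i) ` (insert \<alpha>0 F \<times> (UNIV::'m set)))"
        by (rule Max_ge) (use F(1) that in auto)
      then show ?thesis unfolding K_def by simp
    qed
    have K1: "K \<ge> 1" unfolding K_def by simp
    define \<omega> where "\<omega> = exp (2 * of_real pi * \<i> / of_nat K)"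
    have om1: "cmod (\<omega> ^ n) = 1" for n
      unfolding \<omega>_def norm_power by (simp add: norm_exp_eq_Re)
    define J where "J = PiE (UNIV::'m set) (\<lambda>_. {..<K})"
    have finJ: "finite J" unfolding J_def by (simp add: finite_PiE)
    define z where "z j = (\<lambda>i. \<omega> ^ j i)" for j :: "'m \<Rightarrow> nat"
    define wt where "wt j = (\<Prod>i\<in>UNIV. \<omega> ^ (j i * (K - \<alpha>0 i)))" for j :: "'m \<Rightarrow> nat"
    have hs0: "((\<lambda>\<alpha>. \<Sum>j\<in>J. wt j * (mon UNIV (z j) \<alpha> * a \<alpha>)) has_sum (\<Sum>j\<in>J. wt j * 0)) UNIV"
      by (rule has_sum_sum_fin[OF finJ], rule has_sum_cmult_right, rule z0) (simp add: z_def om1)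
    define SK where "SK = {\<alpha>::'m\<Rightarrow>nat. \<forall>i. K dvd (\<alpha> i + (K - \<alpha>0 i))}"
    have key: "(\<Sum>j\<in>J. wt j * mon UNIV (z j) \<alpha>) = (if \<alpha> \<in> SK then of_nat K ^ CARD('m) else 0)" for \<alpha>
    proof -
      have "(\<Sum>j\<in>J. wt j * mon UNIV (z j) \<alpha>) = (\<Sum>j\<in>J. \<Prod>i\<in>UNIV. \<omega> ^ (j i * (\<alpha> i + (K - \<alpha>0 i))))"
        unfolding wt_def mon_def z_def
        by (rule sum.cong) (simp_all add: prod.distrib[symmetric] power_mult[symmetric] power_add[symmetric] algebra_simps)
      also have "\<dots> = (\<Prod>i\<in>UNIV. \<Sum>t<K. \<omega> ^ (t * (\<alpha> i + (K - \<alpha>0 i))))"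
        unfolding J_def by (subst prod_sum_PiE) auto
      also have "\<dots> = (\<Prod>i\<in>UNIV. if K dvd (\<alpha> i + (K - \<alpha>0 i)) then of_nat K else 0)"
        unfolding \<omega>_def by (simp add: geo_root[OF K1])
      also have "\<dots> = (if \<alpha> \<in> SK then of_nat K ^ CARD('m) else 0)"
      proof (cases "\<alpha> \<in> SK")
        case True then show ?thesis by (simp add: SK_def)
      next
        case False
        then obtain i where i: "\<not> K dvd (\<alpha> i + (K - \<alpha>0 i))" unfolding SK_def by auto
        have "(\<Prod>i\<in>UNIV. if K dvd (\<alpha> i + (K - \<alpha>0 i)) then of_nat K else (0::complex)) = 0"
          by (rule prod_zero) (use i in auto)
        then show ?thesis using False by simp
      qed
      finally show ?thesis .
    qed
    have "((\<lambda>\<alpha>. (if \<alpha> \<in> SK then of_nat K ^ CARD('m) else 0) * a \<alpha>) has_sum 0) UNIV"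
      using hs0 by (simp add: key[symmetric] sum_distrib_right mult.assoc)
    then have "((\<lambda>\<alpha>. of_nat K ^ CARD('m) * a \<alpha>) has_sum 0) SK"
      by (subst has_sum_cong_neutral[where T=UNIV and g="\<lambda>\<alpha>. (if \<alpha> \<in> SK then of_nat K ^ CARD('m) else 0) * a \<alpha>"]) auto
    then have "((\<lambda>\<alpha>. inverse (of_nat K ^ CARD('m)) * (of_nat K ^ CARD('m) * a \<alpha>)) has_sum (inverse (of_nat K ^ CARD('m)) * 0)) SK"
      by (rule has_sum_cmult_right)
    moreover have "inverse (of_nat K ^ CARD('m)) * (of_nat K ^ CARD('m) * a \<alpha>) = a \<alpha>" for \<alpha>
      using K1 by (simp add: field_simps)
    ultimately have hSK: "(a has_sum 0) SK" by simp
    have a0SK: "\<alpha>0 \<in> SK" unfolding SK_def using Kgt[of \<alpha>0] by (simp add: less_imp_le)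
    have sub: "SK - {\<alpha>0} \<subseteq> -F"
    proof
      fix \<alpha> assume \<alpha>: "\<alpha> \<in> SK - {\<alpha>0}"
      show "\<alpha> \<in> -F"
      proof
        assume aF: "\<alpha> \<in> F"
        have "\<alpha> i = \<alpha>0 i" for i
        proof -
          have lt: "\<alpha> i < K" "\<alpha>0 i < K" using Kgt aF by auto
          have dv: "K dvd (\<alpha> i + (K - \<alpha>0 i))" using \<alpha> unfolding SK_def by auto
          then obtain q where q: "\<alpha> i + (K - \<alpha>0 i) = K * q" by (auto simp: dvd_def)
          have "q = 1"
          proof -
            have h1: "K * q > 0" using q lt by (metis add_gr_0 zero_less_diff)
            have "\<alpha> i + (K - \<alpha>0 i) < K * 2" using lt by simp
            then have h2: "K * q < K * 2" by (simp only: q)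
            from h1 h2 have "0 < q" "q < 2" by (simp_all add: mult_less_cancel1)
            then show ?thesis by simp
          qed
          then have "\<alpha> i + (K - \<alpha>0 i) = K" using q by simp
          then show ?thesis using lt by linarith
        qed
        then have "\<alpha> = \<alpha>0" by (rule ext)
        then show False using \<alpha> by blast
      qed
    qed
    have sSK: "a summable_on (SK - {\<alpha>0})" using asum by (rule summable_on_subset_banach) auto
    have nSK: "(\<lambda>\<alpha>. norm (a \<alpha>)) summable_on (SK - {\<alpha>0})" using sa by (rule summable_on_subset) auto
    have SKeq: "SK = {\<alpha>0} \<union> (SK - {\<alpha>0})" using a0SK by blast
    have "infsum a SK = a \<alpha>0 + infsum a (SK - {\<alpha>0})"
      by (subst SKeq, subst infsum_Un_disjoint) (use sSK in auto)
    moreover have "infsum a SK = 0" using hSK by (rule infsumI)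
    ultimately have "a \<alpha>0 = - infsum a (SK - {\<alpha>0})" by (simp add: eq_neg_iff_add_eq_0)
    then have "cmod (a \<alpha>0) = norm (infsum a (SK - {\<alpha>0}))" by simp
    also have "\<dots> \<le> infsum (\<lambda>\<alpha>. norm (a \<alpha>)) (SK - {\<alpha>0})"
      by (rule norm_infsum_bound) (rule nSK)
    also have "\<dots> \<le> infsum (\<lambda>\<alpha>. norm (a \<alpha>)) (-F)"
      by (rule infsum_mono2[OF nSK sF sub]) auto
    also have "\<dots> \<le> e" by (rule tail)
    finally show ?thesis .
  qed
  show ?thesis
  proof (rule ccontr)
    assume "a \<alpha>0 \<noteq> 0"
    then have "cmod (a \<alpha>0) > 0" by simp
    then have "cmod (a \<alpha>0) \<le> cmod (a \<alpha>0) / 2" using main[of "cmod (a \<alpha>0) / 2"] by simp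
    then show False using \<open>cmod (a \<alpha>0) > 0\<close> by simp
  qed
qed

lemma has_sum_diff':
  fixes f g :: "'a \<Rightarrow> 'b::topological_ab_group_add"
  assumes "(f has_sum a) A" "(g has_sum b) A"
  shows "((\<lambda>x. f x - g x) has_sum (a - b)) A"
proof -
  have "((\<lambda>x. - g x) has_sum (- b)) A" using assms(2) by (simp add: has_sum_uminus)
  from has_sum_add[OF assms(1) this] show ?thesis by simp
qed

lemma norm_vsmult: "norm (k *s (v::complex^'s::finite)) = cmod k * norm v"
  unfolding norm_vec_def by (simp add: L2_set_right_distrib norm_mult)

lemma supv_vsmult: "supv (k *s (v::complex^'s::finite)) = cmod k * supv v"
proof -
  have "range (\<lambda>j. cmod ((k *s v) $ j)) = (\<lambda>x. cmod k * x) ` range (\<lambda>j. cmod (v $ j))"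
    by (auto simp: norm_mult)
  then show ?thesis unfolding supv_def
    by (simp add: mono_Max_commute[symmetric] mono_def mult_left_mono)
qed

lemma supv_add: "supv (v + w :: complex^'s::finite) \<le> supv v + supv w"
  unfolding supv_def
  by (subst Max_le_iff) (auto intro!: add_mono norm_triangle_le Max_ge)

lemma supv_zero[simp]: "supv (0::complex^'s::finite) = 0"
  unfolding supv_def by simp

lemma supv_eq_0: "supv (v::complex^'s::finite) = 0 \<longleftrightarrow> v = 0"
proof
  assume "supv v = 0"
  then have "cmod (v $ j) = 0" for j using cmod_nth_le_supv[of v j] norm_ge_zero[of "v$j"] by linarith
  then show "v = 0" by (simp add: vec_eq_iff)
qed simp

lemma bounded_linear_vsmult: "bounded_linear (\<lambda>v::complex^'s::finite. k *s v)"
  by (rule bounded_linear_intro[where K="cmod k"]) (auto simp: norm_vsmult vector_ssub_ldistrib algebra_simps vec_eq_iff)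

lemma has_sum_vsmult:
  assumes "(f has_sum s) A"
  shows "((\<lambda>x. k *s (f x :: complex^'s::finite)) has_sum (k *s s)) A"
  using has_sum_bounded_linear[OF bounded_linear_vsmult assms] .

lemma has_sum_nth:
  assumes "(f has_sum s) A"
  shows "((\<lambda>x. (f x :: complex^'s::finite) $ j) has_sum (s $ j)) A"
  using has_sum_bounded_linear[OF bounded_linear_vec_nth assms] .

lemma xrep_coef: "inX f \<Longrightarrow> xrep (coefX f) f"
  using someI_ex[of "is_Arep 1 UNIV f"] by (simp add: inA_def coefA_def is_Arep_X)

lemma xrep_inX: "xrep c f \<Longrightarrow> inX f"
  unfolding inA_def is_Arep_X[symmetric] by blast

lemma xrep_uniq:
  assumes "xrep c f" "xrep c' f"
  shows "c = c'"
proof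
  fix \<alpha>0
  show "c \<alpha>0 = c' \<alpha>0"
  proof (subst vec_eq_iff, rule allI)
    fix j
    define a where "a \<alpha> = (c \<alpha> - c' \<alpha>) $ j" for \<alpha>
    have s1: "(\<lambda>\<alpha>. norm (c \<alpha>) + norm (c' \<alpha>)) summable_on UNIV"
      using assms unfolding xrep_def by (intro summable_on_add) auto
    have sa: "(\<lambda>\<alpha>. norm (a \<alpha>)) summable_on UNIV"
    proof (rule summable_on_comparison_test[OF s1])
      fix \<alpha>
      have "norm (a \<alpha>) \<le> norm (c \<alpha> - c' \<alpha>)" unfolding a_def by (rule Finite_Cartesian_Product.norm_nth_le)
      also have "\<dots> \<le> norm (c \<alpha>) + norm (c' \<alpha>)" by (rule norm_triangle_ineq4)
      finally show "norm (a \<alpha>) \<le> norm (c \<alpha>) + norm (c' \<alpha>)" .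
    qed simp
    have z0: "((\<lambda>\<alpha>. mon UNIV z \<alpha> * a \<alpha>) has_sum 0) UNIV" if z: "\<forall>i. cmod (z i) \<le> 1" for z
    proof -
      have "((\<lambda>\<alpha>. mon UNIV z \<alpha> *s c \<alpha> - mon UNIV z \<alpha> *s c' \<alpha>) has_sum (f z - f z)) UNIV"
        using assms z unfolding xrep_def by (intro has_sum_diff') auto
      from has_sum_nth[OF this, of j] show ?thesis by (simp add: a_def algebra_simps)
    qed
    have "a \<alpha>0 = 0" by (rule uniq_scalar[OF sa z0])
    then show "c \<alpha>0 $ j = c' \<alpha>0 $ j" by (simp add: a_def)
  qed
qed

lemma xrep_coefX: "xrep c f \<Longrightarrow> coefX f = c"
  using xrep_coef xrep_inX xrep_uniq by blast

lemma mdeg_pow1: "(1::real) ^ mdeg I \<alpha> = 1" by simp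

lemma xrep_normX: "xrep c f \<Longrightarrow> normX f = infsum (\<lambda>\<alpha>. supv (c \<alpha>)) UNIV"
  unfolding normA_def by (simp add: xrep_coefX)

lemma xrep_summ_supv: "xrep c f \<Longrightarrow> (\<lambda>\<alpha>. supv (c \<alpha>)) summable_on UNIV"
  unfolding xrep_def supv_summable_iff by simp

lemma normX_nonneg: "xrep c f \<Longrightarrow> 0 \<le> normX f"
  by (simp add: xrep_normX infsum_nonneg supv_nonneg)

lemma xrep_eqX: "xrep c f \<Longrightarrow> xrep c g \<Longrightarrow> eqX f g"
  unfolding eqX_def xrep_def polydisc_def using has_sum_unique by blast

lemma eqX_Arep: "eqX f g \<Longrightarrow> is_Arep 1 UNIV f = is_Arep 1 UNIV g"
  unfolding eqX_def is_Arep_def by (intro ext) auto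

lemma eqX_coefX: "eqX f g \<Longrightarrow> coefX f = coefX g"
  unfolding coefA_def by (simp add: eqX_Arep)

lemma eqX_inX: "eqX f g \<Longrightarrow> inX f = inX g"
  unfolding inA_def by (simp add: eqX_Arep)

lemma eqX_normX: "eqX f g \<Longrightarrow> normX f = normX g"
  unfolding normA_def by (simp add: eqX_coefX)

lemma eqX_xrep: "eqX f g \<Longrightarrow> xrep c f = xrep c g"
  using eqX_Arep[of f g] is_Arep_X by metis

lemma eqX_refl: "eqX f f" by (simp add: eqX_def)
lemma eqX_sym: "eqX f g \<Longrightarrow> eqX g f" by (simp add: eqX_def)
lemma eqX_trans: "eqX f g \<Longrightarrow> eqX g h \<Longrightarrow> eqX f h" by (simp add: eqX_def)

lemma xrep_add:
  assumes "xrep ca f" "xrep cb g"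
  shows "xrep (\<lambda>\<alpha>. ca \<alpha> + cb \<alpha>) (\<lambda>z. f z + g z)"
  unfolding xrep_def
proof (intro conjI allI impI)
  have "(\<lambda>\<alpha>. norm (ca \<alpha>) + norm (cb \<alpha>)) summable_on UNIV"
    using assms unfolding xrep_def by (intro summable_on_add) auto
  then show "(\<lambda>\<alpha>. norm (ca \<alpha> + cb \<alpha>)) summable_on UNIV"
    by (rule summable_on_comparison_test) (auto intro: norm_triangle_ineq)
next
  fix z :: "'a \<Rightarrow> complex" assume "\<forall>i. cmod (z i) \<le> 1"
  then have "((\<lambda>\<alpha>. mon UNIV z \<alpha> *s ca \<alpha> + mon UNIV z \<alpha> *s cb \<alpha>) has_sum f z + g z) UNIV"
    using assms unfolding xrep_def by (intro has_sum_add) auto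
  then show "((\<lambda>\<alpha>. mon UNIV z \<alpha> *s (ca \<alpha> + cb \<alpha>)) has_sum f z + g z) UNIV"
    by (simp add: vector_add_ldistrib)
qed

lemma xrep_smult:
  assumes "xrep c f"
  shows "xrep (\<lambda>\<alpha>. k *s c \<alpha>) (\<lambda>z. k *s f z)"
  unfolding xrep_def
proof (intro conjI allI impI)
  have "(\<lambda>\<alpha>. cmod k * norm (c \<alpha>)) summable_on UNIV"
    using assms unfolding xrep_def by (intro summable_on_cmult_right) auto
  then show "(\<lambda>\<alpha>. norm (k *s c \<alpha>)) summable_on UNIV" by (simp add: norm_vsmult)
next
  fix z :: "'a \<Rightarrow> complex" assume "\<forall>i. cmod (z i) \<le> 1"
  then have "((\<lambda>\<alpha>. k *s (mon UNIV z \<alpha> *s c \<alpha>)) has_sum k *s f z) UNIV"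
    using assms unfolding xrep_def by (intro has_sum_vsmult) auto
  then show "((\<lambda>\<alpha>. mon UNIV z \<alpha> *s (k *s c \<alpha>)) has_sum k *s f z) UNIV"
    by (simp add: vector_smult_assoc mult.commute)
qed

lemma xrep_diff:
  assumes "xrep ca f" "xrep cb g"
  shows "xrep (\<lambda>\<alpha>. ca \<alpha> - cb \<alpha>) (\<lambda>z. f z - g z)"
  using xrep_add[OF assms(1) xrep_smult[OF assms(2), of "-1"]]
  by (simp add: vector_sneg_minus1[symmetric])

lemma xrep_sum:
  assumes "finite S" "\<And>i. i \<in> S \<Longrightarrow> xrep (c i) (f i)"
  shows "xrep (\<lambda>\<alpha>. \<Sum>i\<in>S. c i \<alpha>) (\<lambda>z. \<Sum>i\<in>S. f i z)"
  using assms
proof (induction S rule: finite_induct)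
  case empty
  then show ?case by (simp add: xrep_def)
next
  case (insert x F)
  then show ?case using xrep_add[of "c x" "f x" "\<lambda>\<alpha>. \<Sum>i\<in>F. c i \<alpha>" "\<lambda>z. \<Sum>i\<in>F. f i z"] by simp
qed

lemma xrep_of_summable:
  assumes "(\<lambda>\<alpha>. norm (c \<alpha>)) summable_on UNIV"
  shows "xrep c (\<lambda>z. infsum (\<lambda>\<alpha>. mon UNIV z \<alpha> *s c \<alpha>) UNIV)"
  unfolding xrep_def
proof (intro conjI allI impI assms)
  fix z :: "'a \<Rightarrow> complex" assume z: "\<forall>i. cmod (z i) \<le> 1"
  have "(\<lambda>\<alpha>. norm (mon UNIV z \<alpha> *s c \<alpha>)) summable_on UNIV"
  proof (rule summable_on_comparison_test[OF assms])
    fix \<alpha>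
    have "cmod (mon UNIV z \<alpha>) \<le> 1" using z by (intro mon_bound) auto
    then show "norm (mon UNIV z \<alpha> *s c \<alpha>) \<le> norm (c \<alpha>)"
      by (simp add: norm_vsmult mult_left_le_one_le)
  qed simp
  then have "(\<lambda>\<alpha>. mon UNIV z \<alpha> *s c \<alpha>) summable_on UNIV" by (rule abs_summable_summable)
  then show "((\<lambda>\<alpha>. mon UNIV z \<alpha> *s c \<alpha>) has_sum infsum (\<lambda>\<alpha>. mon UNIV z \<alpha> *s c \<alpha>) UNIV) UNIV"
    by (simp add: has_sum_infsum)
qed

lemma normX_le_sum_norm:
  assumes "xrep c f"
  shows "normX f \<le> infsum (\<lambda>\<alpha>. norm (c \<alpha>)) UNIV"
  unfolding xrep_normX[OF assms]
  using assms unfolding xrep_def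
  by (intro infsum_mono) (auto simp: supv_summable_iff supv_le_norm)

lemma sum_norm_le_normX:
  fixes c :: "_ \<Rightarrow> complex^'d::finite"
  assumes "xrep c f"
  shows "infsum (\<lambda>\<alpha>. norm (c \<alpha>)) UNIV \<le> real CARD('d) * normX f"
proof -
  have "infsum (\<lambda>\<alpha>. norm (c \<alpha>)) UNIV \<le> infsum (\<lambda>\<alpha>. real CARD('d) * supv (c \<alpha>)) UNIV"
    using assms unfolding xrep_def
    by (intro infsum_mono) (auto simp: supv_summable_iff norm_le_supv intro: summable_on_cmult_right)
  also have "\<dots> = real CARD('d) * normX f"
    by (simp add: infsum_cmult_right xrep_normX[OF assms] xrep_summ_supv[OF assms])
  finally show ?thesis .
qed

lemma xrep_value_bound:
  assumes "xrep c f" "\<forall>i. cmod (z i) \<le> 1"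
  shows "norm (f z) \<le> infsum (\<lambda>\<alpha>. norm (c \<alpha>)) UNIV"
proof (rule norm_infsum_le)
  show "((\<lambda>\<alpha>. mon UNIV z \<alpha> *s c \<alpha>) has_sum f z) UNIV" using assms unfolding xrep_def by auto
  show "((\<lambda>\<alpha>. norm (c \<alpha>)) has_sum infsum (\<lambda>\<alpha>. norm (c \<alpha>)) UNIV) UNIV"
    using assms unfolding xrep_def by (simp add: has_sum_infsum)
  fix \<alpha>
  have "cmod (mon UNIV z \<alpha>) \<le> 1" using assms by (intro mon_bound) auto
  then show "norm (mon UNIV z \<alpha> *s c \<alpha>) \<le> norm (c \<alpha>)"
    by (simp add: norm_vsmult mult_left_le_one_le)
qed

lemma normX_zero_eqX:
  assumes "xrep c f" "normX f = 0"
  shows "eqX f (\<lambda>_. 0)"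
proof -
  have "supv (c \<alpha>) = 0" for \<alpha>
    using nonneg_infsum_le_0D[of "\<lambda>\<alpha>. supv (c \<alpha>)" UNIV \<alpha>] assms xrep_summ_supv[OF assms(1)]
    by (simp add: xrep_normX supv_nonneg)
  then have "c = (\<lambda>_. 0)" by (auto simp: supv_eq_0)
  moreover have "xrep (\<lambda>_. 0) (\<lambda>_. 0::complex^'d)" by (simp add: xrep_def)
  ultimately show ?thesis using xrep_eqX assms(1) by blast
qed

lemma normX_triangle:
  assumes "xrep ca f" "xrep cb g"
  shows "normX (\<lambda>z. f z + g z) \<le> normX f + normX g"
proof -
  have "normX (\<lambda>z. f z + g z) = infsum (\<lambda>\<alpha>. supv (ca \<alpha> + cb \<alpha>)) UNIV"
    by (rule xrep_normX[OF xrep_add[OF assms]])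
  also have "\<dots> \<le> infsum (\<lambda>\<alpha>. supv (ca \<alpha>) + supv (cb \<alpha>)) UNIV"
    using xrep_summ_supv[OF xrep_add[OF assms]] xrep_summ_supv[OF assms(1)] xrep_summ_supv[OF assms(2)]
    by (intro infsum_mono summable_on_add) (auto intro: supv_add)
  also have "\<dots> = normX f + normX g"
    by (simp add: infsum_add xrep_summ_supv[OF assms(1)] xrep_summ_supv[OF assms(2)] xrep_normX[OF assms(1)] xrep_normX[OF assms(2)])
  finally show ?thesis .
qed

lemma normX_smult:
  assumes "xrep c f"
  shows "normX (\<lambda>z. k *s f z) = cmod k * normX f"
  by (simp add: xrep_normX[OF xrep_smult[OF assms]] xrep_normX[OF assms] supv_vsmult infsum_cmult_right xrep_summ_supv[OF assms])

definition ue :: "'i \<Rightarrow> 'i \<Rightarrow> nat" where "ue x = (\<lambda>y. if y = x then 1 else 0)"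

definition B2 :: "'i set \<Rightarrow> ('i \<Rightarrow> nat) set" where "B2 I = {\<beta>\<in>mindex I. 2 \<le> mdeg I \<beta>}"

lemma ue_mindex: "x \<in> I \<Longrightarrow> ue x \<in> mindex I"
  by (auto simp: ue_def mindex_def)

lemma mdeg_ue: "finite I \<Longrightarrow> x \<in> I \<Longrightarrow> mdeg I (ue x) = 1"
  by (simp add: mdeg_def ue_def)

lemma mon_ue: "finite I \<Longrightarrow> x \<in> I \<Longrightarrow> mon I w (ue x) = w x"
proof -
  assume "finite I" "x \<in> I"
  have "mon I w (ue x) = (\<Prod>i\<in>I. if i = x then w i else 1)"
    unfolding mon_def ue_def by (rule prod.cong) auto
  also have "\<dots> = w x" using \<open>finite I\<close> \<open>x \<in> I\<close> by (simp add: prod.delta)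
  finally show ?thesis .
qed

lemma mon_zero_idx[simp]: "mon I w (\<lambda>_. 0) = 1"
  by (simp add: mon_def)

lemma mdeg_zero_idx[simp]: "mdeg I (\<lambda>_. 0) = 0"
  by (simp add: mdeg_def)

lemma mon_at_zero: "finite I \<Longrightarrow> mon I (\<lambda>_. 0) \<beta> = (if \<forall>i\<in>I. \<beta> i = 0 then 1 else 0)"
  by (auto simp: mon_def prod_zero_iff zero_power)

lemma mindex_zero: "\<beta> \<in> mindex I \<Longrightarrow> (\<forall>i\<in>I. \<beta> i = 0) \<Longrightarrow> \<beta> = (\<lambda>_. 0)"
  by (auto simp: mindex_def)

lemma mdeg_le1:
  assumes "finite I" "\<beta> \<in> mindex I" "mdeg I \<beta> \<le> 1"
  shows "\<beta> = (\<lambda>_. 0) \<or> (\<exists>x\<in>I. \<beta> = ue x)"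
proof (cases "\<forall>i\<in>I. \<beta> i = 0")
  case True then show ?thesis using mindex_zero assms by blast
next
  case False
  then obtain x where x: "x \<in> I" "\<beta> x \<noteq> 0" by auto
  have s: "mdeg I \<beta> = \<beta> x + (\<Sum>i\<in>I-{x}. \<beta> i)"
    unfolding mdeg_def using assms(1) x(1) by (simp add: sum.remove)
  then have bx: "\<beta> x = 1" and r: "(\<Sum>i\<in>I-{x}. \<beta> i) = 0" using assms(3) x(2) by auto
  have "\<beta> = ue x"
  proof
    fix y show "\<beta> y = ue x y"
    proof (cases "y = x")
      case True then show ?thesis using bx by (simp add: ue_def)
    next
      case False
      show ?thesis
      proof (cases "y \<in> I")
        case True
        then have "\<beta> y = 0" using r assms(1) False by (simp add: sum_eq_0_iff)
        then show ?thesis using False by (simp add: ue_def)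
      next
        case False
        then show ?thesis using assms(2) \<open>y \<noteq> x\<close> by (simp add: mindex_def ue_def)
      qed
    qed
  qed
  then show ?thesis using x by blast
qed

lemma mon_bound_r:
  assumes "0 \<le> r" "\<forall>i\<in>I. cmod (w i) \<le> r"
  shows "cmod (mon I w \<beta>) \<le> r ^ mdeg I \<beta>"
proof -
  have "cmod (mon I w \<beta>) = (\<Prod>i\<in>I. cmod (w i) ^ \<beta> i)"
    unfolding mon_def prod_norm[symmetric] by (simp add: norm_power)
  also have "\<dots> \<le> (\<Prod>i\<in>I. r ^ \<beta> i)"
    by (rule prod_mono) (use assms in \<open>auto intro: power_mono\<close>)
  also have "\<dots> = r ^ mdeg I \<beta>" unfolding mdeg_def by (simp add: power_sum)
  finally show ?thesis .
qed

context
  fixes \<rho> :: real and I :: "'i set" and Z :: "('i \<Rightarrow> complex) \<Rightarrow> complex^'d::finite" and cZ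
  assumes finI: "finite I" and rho: "\<rho> > 0" and repZ: "is_Arep \<rho> I Z cZ" and Z0: "Z (\<lambda>_. 0) = 0"
begin

lemma cZ_norm_summable: "(\<lambda>\<beta>. norm (cZ \<beta>) * \<rho> ^ mdeg I \<beta>) summable_on mindex I"
proof -
  have "(\<lambda>\<beta>. real CARD('d) * (supv (cZ \<beta>) * \<rho> ^ mdeg I \<beta>)) summable_on mindex I"
    using repZ unfolding is_Arep_def by (intro summable_on_cmult_right) auto
  then show ?thesis
    by (rule summable_on_comparison_test)
       (use rho in \<open>auto intro!: mult_right_mono simp: norm_le_supv mult.assoc[symmetric]\<close>)
qed

lemma Z_has_sum: "w \<in> polydisc \<rho> I \<Longrightarrow> ((\<lambda>\<beta>. mon I w \<beta> *s cZ \<beta>) has_sum Z w) (mindex I)"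
  using repZ unfolding is_Arep_def by auto

lemma Z_term_summable:
  assumes "w \<in> polydisc \<rho> I"
  shows "(\<lambda>\<beta>. norm (mon I w \<beta> *s cZ \<beta>)) summable_on mindex I"
proof (rule summable_on_comparison_test[OF cZ_norm_summable])
  fix \<beta>
  have "cmod (mon I w \<beta>) \<le> \<rho> ^ mdeg I \<beta>"
    using assms rho by (intro mon_bound_r) (auto simp: polydisc_def)
  then show "norm (mon I w \<beta> *s cZ \<beta>) \<le> norm (cZ \<beta>) * \<rho> ^ mdeg I \<beta>"
    by (simp add: norm_vsmult mult.commute mult_left_mono)
qed simp

lemma cZ_zero: "cZ (\<lambda>_. 0) = 0"
proof -
  have w0: "(\<lambda>_. 0) \<in> polydisc \<rho> I" using rho by (simp add: polydisc_def)
  have "((\<lambda>\<beta>. mon I (\<lambda>_. 0) \<beta> *s cZ \<beta>) has_sum Z (\<lambda>_. 0)) (mindex I)" by (rule Z_has_sum[OF w0])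
  moreover have "((\<lambda>\<beta>. mon I (\<lambda>_. 0) \<beta> *s cZ \<beta>) has_sum cZ (\<lambda>_. 0)) (mindex I)"
  proof -
    have "((\<lambda>\<beta>. mon I (\<lambda>_. 0) \<beta> *s cZ \<beta>) has_sum (sum (\<lambda>\<beta>. mon I (\<lambda>_. 0) \<beta> *s cZ \<beta>) {\<lambda>_. 0})) {\<lambda>_. 0}"
      by (rule has_sum_finite) simp
    then have "((\<lambda>\<beta>. mon I (\<lambda>_. 0) \<beta> *s cZ \<beta>) has_sum cZ (\<lambda>_. 0)) {\<lambda>_. 0}" by simp
    moreover have "(\<lambda>_. 0) \<in> mindex I" by (simp add: mindex_def)
    ultimately show ?thesis
      by (subst (asm) has_sum_cong_neutral[where T="mindex I"])
         (auto simp: mon_at_zero[OF finI] dest: mindex_zero)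
  qed
  ultimately show ?thesis using Z0 has_sum_unique by metis
qed

lemma B01_eq: "{\<beta>\<in>mindex I. mdeg I \<beta> \<le> 1} = insert (\<lambda>_. 0) (ue ` I)"
  proof
  show "{\<beta>\<in>mindex I. mdeg I \<beta> \<le> 1} \<subseteq> insert (\<lambda>_. 0) (ue ` I)" using mdeg_le1[OF finI] by blast
  show "insert (\<lambda>_. 0) (ue ` I) \<subseteq> {\<beta>\<in>mindex I. mdeg I \<beta> \<le> 1}"
  proof -
    have "(\<lambda>_. 0) \<in> mindex I" by (simp add: mindex_def)
    then show ?thesis using mdeg_ue[OF finI] ue_mindex by auto
  qed
qed

lemma Z_split:
  assumes w: "w \<in> polydisc \<rho> I"
  shows "Z w = (\<Sum>x\<in>I. w x *s cZ (ue x)) + infsum (\<lambda>\<beta>. mon I w \<beta> *s cZ \<beta>) (B2 I)"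
proof -
  define f where "f \<beta> = mon I w \<beta> *s cZ \<beta>" for \<beta>
  have sm: "f summable_on mindex I" unfolding f_def by (rule abs_summable_summable[OF Z_term_summable[OF w]])
  have un: "mindex I = {\<beta>\<in>mindex I. mdeg I \<beta> \<le> 1} \<union> B2 I" by (auto simp: B2_def)
  have fin: "finite {\<beta>\<in>mindex I. mdeg I \<beta> \<le> 1}" unfolding B01_eq using finI by simp
  have "Z w = infsum f (mindex I)" unfolding f_def using Z_has_sum[OF w] by (simp add: infsumI)
  also have "\<dots> = infsum f {\<beta>\<in>mindex I. mdeg I \<beta> \<le> 1} + infsum f (B2 I)"
    by (subst un, rule infsum_Un_disjoint)
       (use fin in \<open>auto simp: B2_def intro: summable_on_subset_banach[OF sm]\<close>)
  also have "infsum f {\<beta>\<in>mindex I. mdeg I \<beta> \<le> 1} = (\<Sum>x\<in>I. w x *s cZ (ue x))"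
  proof -
    have "infsum f {\<beta>\<in>mindex I. mdeg I \<beta> \<le> 1} = sum f (insert (\<lambda>_. 0) (ue ` I))"
      using fin unfolding B01_eq by simp
    also have "\<dots> = f (\<lambda>_. 0) + sum f (ue ` I)"
    proof (rule sum.insert)
      show "finite (ue ` I)" using finI by simp
      have "ue x \<noteq> (\<lambda>_. 0)" for x :: 'i
      proof
        assume "ue x = (\<lambda>_. 0)"
        then have "ue x x = 0" by simp
        then show False by (simp add: ue_def)
      qed
      then show "(\<lambda>_. 0) \<notin> ue ` I" by (metis (no_types) imageE)
    qed
    also have "f (\<lambda>_. 0) = 0" by (simp add: f_def cZ_zero)
    also have "sum f (ue ` I) = (\<Sum>x\<in>I. f (ue x))"
      by (rule sum.reindex_cong[where l=ue]) (auto simp: inj_on_def ue_def fun_eq_iff split: if_splits)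
    also have "\<dots> = (\<Sum>x\<in>I. w x *s cZ (ue x))"
      by (rule sum.cong) (auto simp: f_def mon_ue[OF finI])
    finally show ?thesis by simp
  qed
  finally show ?thesis by (simp add: f_def)
qed

lemma rem_bound:
  assumes r: "0 \<le> r" "r \<le> \<rho>" and w: "\<forall>i\<in>I. cmod (w i) \<le> r"
  shows "norm (infsum (\<lambda>\<beta>. mon I w \<beta> *s cZ \<beta>) (B2 I))
           \<le> (r/\<rho>)^2 * infsum (\<lambda>\<beta>. norm (cZ \<beta>) * \<rho> ^ mdeg I \<beta>) (B2 I)"
proof -
  have wp: "w \<in> polydisc \<rho> I" using w r by (auto simp: polydisc_def)
  have s1: "(\<lambda>\<beta>. norm (mon I w \<beta> *s cZ \<beta>)) summable_on B2 I"
    by (rule summable_on_subset[OF Z_term_summable[OF wp]]) (auto simp: B2_def)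
  have s2: "(\<lambda>\<beta>. norm (cZ \<beta>) * \<rho> ^ mdeg I \<beta>) summable_on B2 I"
    by (rule summable_on_subset[OF cZ_norm_summable]) (auto simp: B2_def)
  have "norm (infsum (\<lambda>\<beta>. mon I w \<beta> *s cZ \<beta>) (B2 I)) \<le> infsum (\<lambda>\<beta>. norm (mon I w \<beta> *s cZ \<beta>)) (B2 I)"
    by (rule norm_infsum_bound[OF s1])
  also have "\<dots> \<le> infsum (\<lambda>\<beta>. (r/\<rho>)^2 * (norm (cZ \<beta>) * \<rho> ^ mdeg I \<beta>)) (B2 I)"
  proof (rule infsum_mono[OF s1 summable_on_cmult_right[OF s2]])
    fix \<beta> assume b: "\<beta> \<in> B2 I"
    define m where "m = mdeg I \<beta>"
    have m2: "m \<ge> 2" using b by (simp add: B2_def m_def)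
    have "cmod (mon I w \<beta>) \<le> r ^ m" unfolding m_def by (rule mon_bound_r[OF r(1) w])
    also have "r ^ m = r^2 * r^(m-2)" using m2 by (metis le_add_diff_inverse power_add)
    also have "\<dots> \<le> r^2 * \<rho>^(m-2)" using r by (intro mult_left_mono power_mono) auto
    also have "\<dots> = (r/\<rho>)^2 * \<rho>^m"
    proof -
      have "\<rho>^m = \<rho>^2 * \<rho>^(m-2)" using m2 by (metis le_add_diff_inverse power_add)
      then show ?thesis using rho by (simp add: power_divide field_simps)
    qed
    finally have "cmod (mon I w \<beta>) \<le> (r/\<rho>)^2 * \<rho>^m" .
    then show "norm (mon I w \<beta> *s cZ \<beta>) \<le> (r/\<rho>)^2 * (norm (cZ \<beta>) * \<rho> ^ mdeg I \<beta>)"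
      unfolding norm_vsmult m_def
      by (metis (no_types, lifting) mult.assoc mult.commute mult_right_mono norm_ge_zero)
  qed
  also have "\<dots> = (r/\<rho>)^2 * infsum (\<lambda>\<beta>. norm (cZ \<beta>) * \<rho> ^ mdeg I \<beta>) (B2 I)"
    by (rule infsum_cmult_right) (use s2 in auto)
  finally show ?thesis .
qed

end

lemma Bmat_eq:
  fixes \<rho> :: real and I :: "(nat \<times> 'd::finite) set" and Z :: "(nat \<times> 'd \<Rightarrow> complex) \<Rightarrow> complex^'d" and cZ
  assumes finI: "finite I" and rho: "\<rho> > 0" and repZ: "is_Arep \<rho> I Z cZ" and Z0: "Z (\<lambda>_. 0) = 0"
    and ik: "(i,k) \<in> I"
  shows "Bmat Z i $ j $ k = cZ (ue (i,k)) $ j"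
proof -
  define wt where "wt t = (\<lambda>x. if x = (i,k) then t else (0::complex))" for t
  define g where "g t = Z (wt t) $ j" for t
  define c1 where "c1 = cZ (ue (i,k)) $ j"
  define R where "R t = infsum (\<lambda>\<beta>. mon I (wt t) \<beta> *s cZ \<beta>) (B2 I)" for t
  define S2 where "S2 = infsum (\<lambda>\<beta>. norm (cZ \<beta>) * \<rho> ^ mdeg I \<beta>) (B2 I)"
  have g0: "g 0 = 0" unfolding g_def wt_def using Z0 by simp
  have gsplit: "g t = t * c1 + R t $ j" if t: "cmod t \<le> \<rho>" for t
  proof -
    have wp: "wt t \<in> polydisc \<rho> I" using t rho by (auto simp: polydisc_def wt_def)
    have "Z (wt t) = (\<Sum>x\<in>I. wt t x *s cZ (ue x)) + R t"
      unfolding R_def by (rule Z_split[OF finI rho repZ Z0 wp])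
    also have "(\<Sum>x\<in>I. wt t x *s cZ (ue x)) = (\<Sum>x\<in>I. if x = (i,k) then t *s cZ (ue x) else 0)"
      by (rule sum.cong) (auto simp: wt_def)
    also have "\<dots> = t *s cZ (ue (i,k))" using finI ik by (simp add: sum.delta)
    finally show ?thesis unfolding g_def c1_def by simp
  qed
  have Rb: "norm (R t) \<le> (cmod t / \<rho>)^2 * S2" if t: "cmod t \<le> \<rho>" for t
    unfolding R_def S2_def
    by (rule rem_bound[OF finI rho repZ Z0]) (use t in \<open>auto simp: wt_def\<close>)
  have lim: "((\<lambda>y. (g y - g 0) / (y - 0) - c1) \<longlongrightarrow> 0) (at 0)"
  proof (rule Lim_null_comparison)
    show "\<forall>\<^sub>F y in at 0. norm ((g y - g 0) / (y - 0) - c1) \<le> cmod y * (S2 / \<rho>^2)"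
      unfolding eventually_at
    proof (intro exI[of _ \<rho>] conjI rho ballI impI)
      fix y :: complex assume y: "y \<in> UNIV" "y \<noteq> 0 \<and> dist y 0 < \<rho>"
      then have yr: "cmod y \<le> \<rho>" by simp
      have "(g y - g 0) / (y - 0) - c1 = R y $ j / y"
        using y(2) by (simp add: g0 gsplit[OF yr] field_simps)
      then have "norm ((g y - g 0) / (y - 0) - c1) = cmod (R y $ j) / cmod y" by (simp add: norm_divide)
      also have "\<dots> \<le> norm (R y) / cmod y"
        by (intro divide_right_mono Finite_Cartesian_Product.norm_nth_le) simp
      also have "\<dots> \<le> (cmod y / \<rho>)^2 * S2 / cmod y"
        by (intro divide_right_mono Rb yr) simp
      also have "\<dots> = cmod y * (S2 / \<rho>^2)"
        using y(2) by (simp add: power2_eq_square field_simps)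
      finally show "norm ((g y - g 0) / (y - 0) - c1) \<le> cmod y * (S2 / \<rho>^2)" .
    qed
    have "((\<lambda>y::complex. cmod y) \<longlongrightarrow> 0) (at 0)"
      using tendsto_norm_zero[OF tendsto_ident_at[of 0 UNIV]] by simp
    from tendsto_mult[OF this tendsto_const[of "S2 / \<rho>^2"]]
    show "((\<lambda>y::complex. cmod y * (S2 / \<rho>^2)) \<longlongrightarrow> 0) (at 0)" by simp
  qed
  have "(g has_field_derivative c1) (at 0)"
    unfolding has_field_derivative_iff by (rule LIM_zero_cancel[OF lim])
  then have "deriv g 0 = c1" by (rule DERIV_imp_deriv)
  then show ?thesis unfolding Bmat_def g_def wt_def c1_def by simp
qed

definition mnorm :: "complex^'n::finite^'m::finite \<Rightarrow> real" where
  "mnorm A = (\<Sum>j\<in>UNIV. \<Sum>k\<in>UNIV. cmod (A $ j $ k))"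

lemma mnorm_nonneg: "0 \<le> mnorm A"
  unfolding mnorm_def by (intro sum_nonneg) auto

lemma norm_mv_le: "norm (A *v v) \<le> mnorm A * norm v"
proof -
  have "norm (A *v v) \<le> (\<Sum>j\<in>UNIV. cmod ((A *v v) $ j))" by (rule norm_le_sum_nth)
  also have "\<dots> \<le> (\<Sum>j\<in>UNIV. \<Sum>k\<in>UNIV. cmod (A $ j $ k) * norm v)"
  proof (rule sum_mono)
    fix j
    have "cmod ((A *v v) $ j) = cmod (\<Sum>k\<in>UNIV. A $ j $ k * v $ k)" by (simp add: matrix_vector_mult_def)
    also have "\<dots> \<le> (\<Sum>k\<in>UNIV. cmod (A $ j $ k * v $ k))" by (rule norm_sum)
    also have "\<dots> \<le> (\<Sum>k\<in>UNIV. cmod (A $ j $ k) * norm v)"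
      by (rule sum_mono) (auto simp: norm_mult intro: mult_left_mono Finite_Cartesian_Product.norm_nth_le)
    finally show "cmod ((A *v v) $ j) \<le> (\<Sum>k\<in>UNIV. cmod (A $ j $ k) * norm v)" .
  qed
  also have "\<dots> = mnorm A * norm v" by (simp add: mnorm_def sum_distrib_right)
  finally show ?thesis .
qed

lemma bounded_linear_mv: "bounded_linear (\<lambda>v::complex^'n::finite. (A::complex^'n^'m::finite) *v v)"
proof (rule bounded_linear_intro[where K="mnorm A"])
  show "A *v (x + y) = A *v x + A *v y" for x y by (simp add: matrix_vector_right_distrib)
  show "A *v (r *\<^sub>R x) = r *\<^sub>R (A *v x)" for r x
    by (simp add: vec_eq_iff matrix_vector_mult_def scaleR_sum_right)
  show "norm (A *v x) \<le> norm x * mnorm A" for x using norm_mv_le[of A x] by (simp add: mult.commute)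
qed

lemma xrep_matmul:
  assumes "xrep c h"
  shows "xrep (\<lambda>\<alpha>. A *v c \<alpha>) (\<lambda>z. A *v h z)"
  unfolding xrep_def
proof (intro conjI allI impI)
  have "(\<lambda>\<alpha>. mnorm A * norm (c \<alpha>)) summable_on UNIV"
    using assms unfolding xrep_def by (intro summable_on_cmult_right) auto
  then show "(\<lambda>\<alpha>. norm (A *v c \<alpha>)) summable_on UNIV"
    by (rule summable_on_comparison_test) (auto simp: norm_mv_le)
next
  fix z :: "'a \<Rightarrow> complex" assume z: "\<forall>i. cmod (z i) \<le> 1"
  then have "((\<lambda>\<alpha>. A *v (mon UNIV z \<alpha> *s c \<alpha>)) has_sum A *v h z) UNIV"
    using assms unfolding xrep_def by (intro has_sum_bounded_linear[OF bounded_linear_mv]) auto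
  then show "((\<lambda>\<alpha>. mon UNIV z \<alpha> *s (A *v c \<alpha>)) has_sum A *v h z) UNIV"
    by (simp add: vector_scalar_commute)
qed

lemma lampow_bound: "\<forall>k. cmod (lam k) \<le> 1 \<Longrightarrow> cmod (lampow lam \<alpha>) \<le> 1"
  unfolding lampow_def prod_norm[symmetric]
  by (rule prod_le_1) (auto simp: norm_power power_le_one)

lemma mon_scaled: "mon UNIV (\<lambda>k. lam k ^ i * z k) \<alpha> = lampow lam \<alpha> ^ i * mon UNIV z \<alpha>"
proof -
  have "mon UNIV (\<lambda>k. lam k ^ i * z k) \<alpha> = (\<Prod>k\<in>UNIV. (lam k ^ \<alpha> k) ^ i * z k ^ \<alpha> k)"
    unfolding mon_def by (rule prod.cong) (simp_all add: power_mult_distrib power_mult[symmetric] mult.commute)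
  also have "\<dots> = (\<Prod>k\<in>UNIV. (lam k ^ \<alpha> k) ^ i) * mon UNIV z \<alpha>"
    unfolding mon_def by (rule prod.distrib)
  also have "(\<Prod>k\<in>UNIV. (lam k ^ \<alpha> k) ^ i) = lampow lam \<alpha> ^ i"
    unfolding lampow_def by (rule prod_power_distrib[symmetric])
  finally show ?thesis .
qed

lemma xrep_scaled:
  assumes lam: "\<forall>k. cmod (lam k) \<le> 1" and "xrep c h"
  shows "xrep (\<lambda>\<alpha>. (lampow lam \<alpha>)^i *s c \<alpha>) (\<lambda>z. h (\<lambda>k. lam k ^ i * z k))"
  unfolding xrep_def
proof (intro conjI allI impI)
  have "(\<lambda>\<alpha>. norm (c \<alpha>)) summable_on UNIV" using assms unfolding xrep_def by auto
  then show "(\<lambda>\<alpha>. norm ((lampow lam \<alpha>)^i *s c \<alpha>)) summable_on UNIV"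
    by (rule summable_on_comparison_test)
       (auto simp: norm_vsmult norm_power lampow_bound[OF lam] power_le_one mult_left_le_one_le)
next
  fix z :: "'a \<Rightarrow> complex" assume z: "\<forall>i. cmod (z i) \<le> 1"
  have z': "\<forall>k. cmod (lam k ^ i * z k) \<le> 1"
  proof
    fix k
    have a: "cmod (lam k) ^ i \<le> 1" using lam by (simp add: power_le_one)
    show "cmod (lam k ^ i * z k) \<le> 1" unfolding norm_mult norm_power
      using a z by (simp add: mult_le_one)
  qed
  have "((\<lambda>\<alpha>. mon UNIV (\<lambda>k. lam k ^ i * z k) \<alpha> *s c \<alpha>) has_sum h (\<lambda>k. lam k ^ i * z k)) UNIV"
    using assms(2) z' unfolding xrep_def by auto
  note hs = this
  have eq: "mon UNIV z \<alpha> *s ((lampow lam \<alpha>)^i *s c \<alpha>) = mon UNIV (\<lambda>k. lam k ^ i * z k) \<alpha> *s c \<alpha>" for \<alpha>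
    unfolding mon_scaled vector_smult_assoc by (simp add: mult.commute)
  show "((\<lambda>\<alpha>. mon UNIV z \<alpha> *s ((lampow lam \<alpha>)^i *s c \<alpha>)) has_sum h (\<lambda>k. lam k ^ i * z k)) UNIV"
    by (simp only: eq hs)
qed

definition Lop :: "nat \<Rightarrow> ('m::finite \<Rightarrow> complex) \<Rightarrow> ((nat \<times> 'd::finite \<Rightarrow> complex) \<Rightarrow> complex ^ 'd)
    \<Rightarrow> (('m \<Rightarrow> complex) \<Rightarrow> complex ^ 'd) \<Rightarrow> (('m \<Rightarrow> complex) \<Rightarrow> complex ^ 'd)" where
  "Lop N lam Z h = (\<lambda>z. \<Sum>i\<le>N. Bmat Z i *v h (\<lambda>k. lam k ^ i * z k))"

lemma Tmat_mv: "Tmat N Z \<mu> *v v = (\<Sum>i\<le>N. Bmat Z i *v (\<mu>^i *s v))"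
  by (simp add: vec_eq_iff Tmat_def matrix_vector_mult_def sum_distrib_right sum_distrib_left
      algebra_simps sum.swap[of _ "{..N}"])

lemma xrep_Lop:
  assumes lam: "\<forall>k. cmod (lam k) \<le> 1" and "xrep c h"
  shows "xrep (\<lambda>\<alpha>. Tmat N Z (lampow lam \<alpha>) *v c \<alpha>) (Lop N lam Z h)"
proof -
  have "xrep (\<lambda>\<alpha>. \<Sum>i\<le>N. Bmat Z i *v ((lampow lam \<alpha>)^i *s c \<alpha>)) (\<lambda>z. \<Sum>i\<le>N. Bmat Z i *v h (\<lambda>k. lam k ^ i * z k))"
    by (rule xrep_sum) (auto intro!: xrep_matmul xrep_scaled assms)
  then show ?thesis unfolding Lop_def by (simp add: Tmat_mv)
qed

definition KT :: "nat \<Rightarrow> ((nat \<times> 'd::finite \<Rightarrow> complex) \<Rightarrow> complex ^ 'd) \<Rightarrow> real" where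
  "KT N Z = (\<Sum>i\<le>N. mnorm (Bmat Z i))"

lemma Tmat_bound:
  assumes "cmod \<mu> \<le> 1"
  shows "norm (Tmat N Z \<mu> *v v) \<le> KT N Z * norm v"
proof -
  have "norm (Tmat N Z \<mu> *v v) \<le> (\<Sum>i\<le>N. norm (Bmat Z i *v (\<mu>^i *s v)))"
    unfolding Tmat_mv by (rule norm_sum)
  also have "\<dots> \<le> (\<Sum>i\<le>N. mnorm (Bmat Z i) * norm v)"
  proof (rule sum_mono)
    fix i
    have "norm (Bmat Z i *v (\<mu>^i *s v)) \<le> mnorm (Bmat Z i) * norm (\<mu>^i *s v)" by (rule norm_mv_le)
    also have "\<dots> \<le> mnorm (Bmat Z i) * norm v"
      using assms by (intro mult_left_mono mnorm_nonneg)
        (simp add: norm_vsmult norm_power power_le_one mult_left_le_one_le)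
    finally show "norm (Bmat Z i *v (\<mu>^i *s v)) \<le> mnorm (Bmat Z i) * norm v" .
  qed
  also have "\<dots> = KT N Z * norm v" by (simp add: KT_def sum_distrib_right)
  finally show ?thesis .
qed

lemma KT_nonneg: "0 \<le> KT N Z"
  unfolding KT_def by (intro sum_nonneg mnorm_nonneg)

definition slots :: "'i set \<Rightarrow> ('i \<Rightarrow> nat) \<Rightarrow> ('i \<times> nat) set" where
  "slots I \<beta> = Sigma I (\<lambda>x. {..<\<beta> x})"

definition PP :: "'i set \<Rightarrow> ('i \<Rightarrow> nat) \<Rightarrow> (('i \<times> nat) \<Rightarrow> ('m::finite \<Rightarrow> nat)) set" where
  "PP I \<beta> = PiE (slots I \<beta>) (\<lambda>_. UNIV)"

definition Eidx :: "'i set \<Rightarrow> ('i \<Rightarrow> nat) \<Rightarrow> (('i \<times> nat) \<Rightarrow> ('m::finite \<Rightarrow> nat)) \<Rightarrow> ('m \<Rightarrow> nat)" where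
  "Eidx I \<beta> p = (\<lambda>i. \<Sum>t\<in>slots I \<beta>. p t i)"

lemma finite_slots: "finite I \<Longrightarrow> finite (slots I \<beta>)"
  by (simp add: slots_def)

lemma card_slots: "finite I \<Longrightarrow> card (slots I \<beta>) = mdeg I \<beta>"
  by (simp add: slots_def card_SigmaI mdeg_def)

lemma mon_slots: "finite I \<Longrightarrow> mon I w \<beta> = (\<Prod>t\<in>slots I \<beta>. w (fst t))"
proof -
  assume f: "finite I"
  have "mon I w \<beta> = (\<Prod>x\<in>I. \<Prod>r\<in>{..<\<beta> x}. w x)" unfolding mon_def by simp
  also have "\<dots> = (\<Prod>(x,r)\<in>slots I \<beta>. w x)" unfolding slots_def by (rule prod.Sigma) (use f in auto)
  finally show ?thesis by (simp add: case_prod_beta)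
qed

lemma mon_Eidx: "finite I \<Longrightarrow> mon UNIV z (Eidx I \<beta> p) = (\<Prod>t\<in>slots I \<beta>. mon UNIV z (p t))"
proof -
  assume f: "finite I"
  have "mon UNIV z (Eidx I \<beta> p) = (\<Prod>i\<in>UNIV. \<Prod>t\<in>slots I \<beta>. z i ^ p t i)"
    unfolding mon_def Eidx_def by (simp add: power_sum)
  also have "\<dots> = (\<Prod>t\<in>slots I \<beta>. \<Prod>i\<in>UNIV. z i ^ p t i)" by (rule prod.swap)
  finally show ?thesis by (simp add: mon_def)
qed

lemma prod_PiE_abs_summable:
  fixes f :: "'a \<Rightarrow> 'b \<Rightarrow> 'c::{real_normed_field,banach,second_countable_topology}"
  assumes "finite A" "\<And>x. x\<in>A \<Longrightarrow> countable (B x)" "\<And>x. x\<in>A \<Longrightarrow> (\<lambda>y. norm (f x y)) summable_on B x"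
  shows "(\<lambda>g. norm (\<Prod>x\<in>A. f x (g x))) summable_on PiE A B"
  using abs_summable_on_prod_PiE[of A B f] abs_summable_equivalent assms by metis

lemma bounded_linear_smultv: "bounded_linear (\<lambda>k::complex. k *s (v::complex^'s::finite))"
proof (rule bounded_linear_intro[where K="norm v"])
  show "(x + y) *s v = x *s v + y *s v" for x y by (rule vector_sadd_rdistrib)
  show "(r *\<^sub>R x) *s v = r *\<^sub>R (x *s v)" for r x
    by (simp only: vec_eq_iff vector_scaleR_component vector_scalar_mult_def vec_lambda_beta)
       (simp add: scaleR_conv_of_real)
  show "norm (x *s v) \<le> norm x * norm v" for x by (simp add: norm_vsmult)
qed

context
  fixes I :: "'i set" and B :: "('i \<Rightarrow> nat) set" and cZ :: "('i \<Rightarrow> nat) \<Rightarrow> complex^'d::finite"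
    and a :: "'i \<Rightarrow> ('m::finite \<Rightarrow> nat) \<Rightarrow> complex" and u :: "'i \<Rightarrow> ('m \<Rightarrow> complex) \<Rightarrow> complex"
    and n :: real
  assumes finI: "finite I"
    and sa: "\<And>x. x\<in>I \<Longrightarrow> (\<lambda>\<alpha>. cmod (a x \<alpha>)) summable_on UNIV"
    and an: "\<And>x. x\<in>I \<Longrightarrow> infsum (\<lambda>\<alpha>. cmod (a x \<alpha>)) UNIV \<le> n"
    and ua: "\<And>x z. x\<in>I \<Longrightarrow> \<forall>i. cmod (z i) \<le> 1 \<Longrightarrow> ((\<lambda>\<alpha>. mon UNIV z \<alpha> * a x \<alpha>) has_sum u x z) UNIV"
    and sc: "(\<lambda>\<beta>. norm (cZ \<beta>) * n ^ mdeg I \<beta>) summable_on B"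
begin

lemma slot_fst: "t \<in> slots I \<beta> \<Longrightarrow> fst t \<in> I"
  by (auto simp: slots_def)

lemma A1: "(\<lambda>p. norm (\<Prod>t\<in>slots I \<beta>. a (fst t) (p t))) summable_on PP I \<beta>"
  unfolding PP_def by (rule prod_PiE_abs_summable) (auto simp: finite_slots[OF finI] sa slot_fst)

lemma A2: "infsum (\<lambda>p. norm (\<Prod>t\<in>slots I \<beta>. a (fst t) (p t))) (PP I \<beta>)
          = (\<Prod>t\<in>slots I \<beta>. infsum (\<lambda>\<alpha>. cmod (a (fst t) \<alpha>)) UNIV)"
proof -
  have "infsum (\<lambda>p. norm (\<Prod>t\<in>slots I \<beta>. a (fst t) (p t))) (PP I \<beta>)
        = infsum (\<lambda>p. \<Prod>t\<in>slots I \<beta>. cmod (a (fst t) (p t))) (PP I \<beta>)"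
    by (simp add: prod_norm)
  also have "\<dots> = (\<Prod>t\<in>slots I \<beta>. infsum (\<lambda>\<alpha>. cmod (a (fst t) \<alpha>)) UNIV)"
    unfolding PP_def by (rule infsum_prod_PiE_abs) (auto simp: finite_slots[OF finI] sa slot_fst)
  finally show ?thesis .
qed

lemma A3: "(\<Prod>t\<in>slots I \<beta>. infsum (\<lambda>\<alpha>. cmod (a (fst t) \<alpha>)) UNIV) \<le> n ^ mdeg I \<beta>"
proof -
  have "(\<Prod>t\<in>slots I \<beta>. infsum (\<lambda>\<alpha>. cmod (a (fst t) \<alpha>)) UNIV) \<le> (\<Prod>t\<in>slots I \<beta>. n)"
    by (rule prod_mono) (auto simp: infsum_nonneg an slot_fst)
  also have "\<dots> = n ^ mdeg I \<beta>" by (simp add: card_slots[OF finI])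
  finally show ?thesis .
qed

lemma A3': "0 \<le> (\<Prod>t\<in>slots I \<beta>. infsum (\<lambda>\<alpha>. cmod (a (fst t) \<alpha>)) UNIV)"
  by (rule prod_nonneg) (auto simp: infsum_nonneg)

lemma A4:
  assumes z: "\<forall>i. cmod (z i) \<le> 1"
  shows "((\<lambda>p. \<Prod>t\<in>slots I \<beta>. mon UNIV z (p t) * a (fst t) (p t)) has_sum mon I (\<lambda>x. u x z) \<beta>) (PP I \<beta>)"
proof -
  have nb: "norm (mon UNIV z \<alpha> * a x \<alpha>) \<le> cmod (a x \<alpha>)" for x \<alpha>
  proof -
    have "cmod (mon UNIV z \<alpha>) \<le> 1" using z by (intro mon_bound) auto
    then show ?thesis by (simp add: norm_mult mult_left_le_one_le)
  qed
  have s1: "(\<lambda>\<alpha>. norm (mon UNIV z \<alpha> * a x \<alpha>)) summable_on UNIV" if "x \<in> I" for x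
    by (rule summable_on_comparison_test[OF sa[OF that]]) (auto simp: nb)
  have "(\<lambda>p. norm (\<Prod>t\<in>slots I \<beta>. mon UNIV z (p t) * a (fst t) (p t))) summable_on PP I \<beta>"
    unfolding PP_def by (rule prod_PiE_abs_summable) (auto simp: finite_slots[OF finI] s1 slot_fst)
  then have sm: "(\<lambda>p. \<Prod>t\<in>slots I \<beta>. mon UNIV z (p t) * a (fst t) (p t)) summable_on PP I \<beta>"
    by (rule abs_summable_summable)
  have "infsum (\<lambda>p. \<Prod>t\<in>slots I \<beta>. mon UNIV z (p t) * a (fst t) (p t)) (PP I \<beta>)
        = (\<Prod>t\<in>slots I \<beta>. infsum (\<lambda>\<alpha>. mon UNIV z \<alpha> * a (fst t) \<alpha>) UNIV)"
    unfolding PP_def by (rule infsum_prod_PiE_abs) (auto simp: finite_slots[OF finI] s1 slot_fst)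
  also have "\<dots> = (\<Prod>t\<in>slots I \<beta>. u (fst t) z)"
  proof (rule prod.cong[OF refl])
    fix t assume t: "t \<in> slots I \<beta>"
    show "infsum (\<lambda>\<alpha>. mon UNIV z \<alpha> * a (fst t) \<alpha>) UNIV = u (fst t) z"
      by (rule infsumI, rule ua[OF slot_fst[OF t] z])
  qed
  also have "\<dots> = mon I (\<lambda>x. u x z) \<beta>" by (simp add: mon_slots[OF finI])
  finally have eq: "infsum (\<lambda>p. \<Prod>t\<in>slots I \<beta>. mon UNIV z (p t) * a (fst t) (p t)) (PP I \<beta>) = mon I (\<lambda>x. u x z) \<beta>" .
  show ?thesis using has_sum_infsum[OF sm] unfolding eq .
qed

definition "SS = Sigma B (PP I)"
definition "VV s = (\<Prod>t\<in>slots I (fst s). a (fst t) (snd s t)) *s cZ (fst s)"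

lemma nV_inner: "(\<lambda>p. norm (VV (\<beta>, p))) summable_on PP I \<beta>"
  unfolding VV_def using summable_on_cmult_left[OF A1, where c="norm (cZ \<beta>)"] by (simp add: norm_vsmult)

lemma nV_inner_sum: "infsum (\<lambda>p. norm (VV (\<beta>, p))) (PP I \<beta>)
    = (\<Prod>t\<in>slots I \<beta>. infsum (\<lambda>\<alpha>. cmod (a (fst t) \<alpha>)) UNIV) * norm (cZ \<beta>)"
proof -
  have "infsum (\<lambda>p. norm (VV (\<beta>, p))) (PP I \<beta>)
       = infsum (\<lambda>p. norm (\<Prod>t\<in>slots I \<beta>. a (fst t) (p t)) * norm (cZ \<beta>)) (PP I \<beta>)"
    unfolding VV_def by (simp add: norm_vsmult)
  also have "\<dots> = infsum (\<lambda>p. norm (\<Prod>t\<in>slots I \<beta>. a (fst t) (p t))) (PP I \<beta>) * norm (cZ \<beta>)"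
    by (rule infsum_cmult_left) (use A1 in auto)
  finally show ?thesis by (simp add: A2)
qed

lemma nV_outer_le: "infsum (\<lambda>p. norm (VV (\<beta>, p))) (PP I \<beta>) \<le> norm (cZ \<beta>) * n ^ mdeg I \<beta>"
  unfolding nV_inner_sum by (metis A3 mult.commute mult_left_mono norm_ge_zero)

lemma nV_outer_summable: "(\<lambda>\<beta>. infsum (\<lambda>p. norm (VV (\<beta>, p))) (PP I \<beta>)) summable_on B"
  by (rule summable_on_comparison_test[OF sc]) (auto intro: nV_outer_le infsum_nonneg)

lemma nV_summable: "(\<lambda>s. norm (VV s)) summable_on SS"
  unfolding SS_def Infinite_Sum.abs_summable_on_Sigma_iff
proof (intro conjI ballI)
  show "(\<lambda>p. norm (VV (\<beta>, p))) summable_on PP I \<beta>" for \<beta> by (rule nV_inner)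
  show "(\<lambda>\<beta>. norm (infsum (\<lambda>p. norm (VV (\<beta>, p))) (PP I \<beta>))) summable_on B"
    using nV_outer_summable by (simp add: infsum_nonneg)
qed

lemma nV_sum_le: "infsum (\<lambda>s. norm (VV s)) SS \<le> infsum (\<lambda>\<beta>. norm (cZ \<beta>) * n ^ mdeg I \<beta>) B"
proof -
  have "infsum (\<lambda>s. norm (VV s)) SS = infsum (\<lambda>\<beta>. infsum (\<lambda>p. norm (VV (\<beta>, p))) (PP I \<beta>)) B"
    unfolding SS_def by (rule infsum_Sigma_banach[symmetric]) (use nV_summable in \<open>simp add: SS_def\<close>)
  also have "\<dots> \<le> infsum (\<lambda>\<beta>. norm (cZ \<beta>) * n ^ mdeg I \<beta>) B"
    by (rule infsum_mono[OF nV_outer_summable sc]) (rule nV_outer_le)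
  finally show ?thesis .
qed

definition "FF z = infsum (\<lambda>\<beta>. mon I (\<lambda>x. u x z) \<beta> *s cZ \<beta>) B"
definition "EE s = Eidx I (fst s) (snd s)"

lemma term_has_sum:
  assumes z: "\<forall>i. cmod (z i) \<le> 1"
  shows "((\<lambda>s. mon UNIV z (EE s) *s VV s) has_sum FF z) SS"
proof -
  have tb: "norm (mon UNIV z (EE s) *s VV s) \<le> norm (VV s)" for s
  proof -
    have "cmod (mon UNIV z (EE s)) \<le> 1" using z by (intro mon_bound) auto
    then show ?thesis by (simp add: norm_vsmult mult_left_le_one_le)
  qed
  have "(\<lambda>s. norm (mon UNIV z (EE s) *s VV s)) summable_on SS"
    by (rule summable_on_comparison_test[OF nV_summable]) (auto simp: tb)
  then have sm: "(\<lambda>s. mon UNIV z (EE s) *s VV s) summable_on SS" by (rule abs_summable_summable)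
  have tform: "mon UNIV z (EE (\<beta>,p)) *s VV (\<beta>,p) = (\<Prod>t\<in>slots I \<beta>. mon UNIV z (p t) * a (fst t) (p t)) *s cZ \<beta>" for \<beta> p
    unfolding EE_def VV_def by (simp add: mon_Eidx[OF finI] prod.distrib vector_smult_assoc)
  have inner: "((\<lambda>p. mon UNIV z (EE (\<beta>,p)) *s VV (\<beta>,p)) has_sum mon I (\<lambda>x. u x z) \<beta> *s cZ \<beta>) (PP I \<beta>)" for \<beta>
    unfolding tform by (rule has_sum_bounded_linear[OF bounded_linear_smultv A4[OF z]])
  have hs: "((\<lambda>s. mon UNIV z (EE s) *s VV s) has_sum infsum (\<lambda>s. mon UNIV z (EE s) *s VV s) SS) SS"
    using sm by (rule has_sum_infsum)
  then have "((\<lambda>\<beta>. mon I (\<lambda>x. u x z) \<beta> *s cZ \<beta>) has_sum infsum (\<lambda>s. mon UNIV z (EE s) *s VV s) SS) B"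
    unfolding SS_def by (rule has_sum_SigmaD) (rule inner)
  then have "FF z = infsum (\<lambda>s. mon UNIV z (EE s) *s VV s) SS" unfolding FF_def by (rule infsumI)
  then show ?thesis using hs by simp
qed

definition "GG \<gamma> = infsum VV {s\<in>SS. EE s = \<gamma>}"

lemma VV_fiber_summable: "VV summable_on {s\<in>SS. EE s = \<gamma>}"
  by (rule summable_on_subset_banach[OF abs_summable_summable[OF nV_summable]]) auto

lemma nV_fiber_summable: "(\<lambda>s. norm (VV s)) summable_on {s\<in>SS. EE s = \<gamma>}"
  by (rule summable_on_subset[OF nV_summable]) auto

lemma reindex_fibers:
  "(f has_sum S) SS \<longleftrightarrow> ((\<lambda>(\<gamma>,s). f s) has_sum S) (Sigma UNIV (\<lambda>\<gamma>. {s\<in>SS. EE s = \<gamma>}))"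
  by (rule has_sum_reindex_bij_witness[where i=snd and j="\<lambda>s. (EE s, s)"]) auto

lemma GG_rep: "xrep GG FF"
  unfolding xrep_def
proof (intro conjI allI impI)
  have hn: "((\<lambda>s. norm (VV s)) has_sum infsum (\<lambda>s. norm (VV s)) SS) SS"
    using nV_summable by (rule has_sum_infsum)
  then have "((\<lambda>(\<gamma>,s). norm (VV s)) has_sum infsum (\<lambda>s. norm (VV s)) SS) (Sigma UNIV (\<lambda>\<gamma>. {s\<in>SS. EE s = \<gamma>}))"
    by (simp add: reindex_fibers)
  then have h2: "((\<lambda>\<gamma>. infsum (\<lambda>s. norm (VV s)) {s\<in>SS. EE s = \<gamma>}) has_sum infsum (\<lambda>s. norm (VV s)) SS) UNIV"
    by (rule has_sum_SigmaD) (auto intro: has_sum_infsum nV_fiber_summable)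
  show "(\<lambda>\<gamma>. norm (GG \<gamma>)) summable_on UNIV"
  proof (rule summable_on_comparison_test)
    show "(\<lambda>\<gamma>. infsum (\<lambda>s. norm (VV s)) {s\<in>SS. EE s = \<gamma>}) summable_on UNIV" using h2 summable_on_def by blast
    show "norm (GG \<gamma>) \<le> infsum (\<lambda>s. norm (VV s)) {s\<in>SS. EE s = \<gamma>}" for \<gamma>
      unfolding GG_def by (rule norm_infsum_bound[OF nV_fiber_summable])
  qed simp
next
  fix z :: "'m \<Rightarrow> complex" assume z: "\<forall>i. cmod (z i) \<le> 1"
  have "((\<lambda>(\<gamma>,s). mon UNIV z (EE s) *s VV s) has_sum FF z) (Sigma UNIV (\<lambda>\<gamma>. {s\<in>SS. EE s = \<gamma>}))"
    using term_has_sum[OF z] by (simp add: reindex_fibers)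
  moreover have "((\<lambda>(\<gamma>,s). mon UNIV z (EE s) *s VV s) has_sum FF z) (Sigma UNIV (\<lambda>\<gamma>. {s\<in>SS. EE s = \<gamma>}))
      \<longleftrightarrow> ((\<lambda>(\<gamma>,s). mon UNIV z \<gamma> *s VV s) has_sum FF z) (Sigma UNIV (\<lambda>\<gamma>. {s\<in>SS. EE s = \<gamma>}))"
    by (rule has_sum_cong) auto
  ultimately have h: "((\<lambda>(\<gamma>,s). mon UNIV z \<gamma> *s VV s) has_sum FF z) (Sigma UNIV (\<lambda>\<gamma>. {s\<in>SS. EE s = \<gamma>}))" by simp
  show "((\<lambda>\<gamma>. mon UNIV z \<gamma> *s GG \<gamma>) has_sum FF z) UNIV"
  proof (rule has_sum_SigmaD[OF h])
    fix \<gamma>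
    show "((\<lambda>s. case (\<gamma>, s) of (\<gamma>, s) \<Rightarrow> mon UNIV z \<gamma> *s VV s) has_sum mon UNIV z \<gamma> *s GG \<gamma>) {s\<in>SS. EE s = \<gamma>}"
      unfolding GG_def using has_sum_vsmult[OF has_sum_infsum[OF VV_fiber_summable]] by simp
  qed
qed

lemma GG_norm_le: "infsum (\<lambda>\<gamma>. norm (GG \<gamma>)) UNIV \<le> infsum (\<lambda>\<beta>. norm (cZ \<beta>) * n ^ mdeg I \<beta>) B"
proof -
  have hn: "((\<lambda>s. norm (VV s)) has_sum infsum (\<lambda>s. norm (VV s)) SS) SS"
    using nV_summable by (rule has_sum_infsum)
  then have "((\<lambda>(\<gamma>,s). norm (VV s)) has_sum infsum (\<lambda>s. norm (VV s)) SS) (Sigma UNIV (\<lambda>\<gamma>. {s\<in>SS. EE s = \<gamma>}))"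
    by (simp add: reindex_fibers)
  then have h2: "((\<lambda>\<gamma>. infsum (\<lambda>s. norm (VV s)) {s\<in>SS. EE s = \<gamma>}) has_sum infsum (\<lambda>s. norm (VV s)) SS) UNIV"
    by (rule has_sum_SigmaD) (auto intro: has_sum_infsum nV_fiber_summable)
  have "infsum (\<lambda>\<gamma>. norm (GG \<gamma>)) UNIV \<le> infsum (\<lambda>\<gamma>. infsum (\<lambda>s. norm (VV s)) {s\<in>SS. EE s = \<gamma>}) UNIV"
  proof (rule infsum_mono)
    show "(\<lambda>\<gamma>. norm (GG \<gamma>)) summable_on UNIV" using GG_rep unfolding xrep_def by auto
    show "(\<lambda>\<gamma>. infsum (\<lambda>s. norm (VV s)) {s\<in>SS. EE s = \<gamma>}) summable_on UNIV" using h2 summable_on_def by blast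
    show "norm (GG \<gamma>) \<le> infsum (\<lambda>s. norm (VV s)) {s\<in>SS. EE s = \<gamma>}" for \<gamma>
      unfolding GG_def by (rule norm_infsum_bound[OF nV_fiber_summable])
  qed
  also have "\<dots> = infsum (\<lambda>s. norm (VV s)) SS" using h2 by (rule infsumI)
  also have "\<dots> \<le> infsum (\<lambda>\<beta>. norm (cZ \<beta>) * n ^ mdeg I \<beta>) B" by (rule nV_sum_le)
  finally show ?thesis .
qed

lemma composition:
  "\<exists>G. xrep G (\<lambda>z. infsum (\<lambda>\<beta>. mon I (\<lambda>x. u x z) \<beta> *s cZ \<beta>) B) \<and>
       infsum (\<lambda>\<gamma>. norm (G \<gamma>)) UNIV \<le> infsum (\<lambda>\<beta>. norm (cZ \<beta>) * n ^ mdeg I \<beta>) B"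
  using GG_rep GG_norm_le unfolding FF_def[abs_def] by blast

end

lemma vsmult_sum: "c *s sum f A = sum (\<lambda>x. c *s (f x :: complex^'s::finite)) A"
  by (simp add: vec_eq_iff sum_distrib_left)

lemma Phi_zero: "Phi N lam Z (\<lambda>_. 0) z = Z (\<lambda>_. 0)"
proof -
  have "(\<lambda>p::nat \<times> 'a. if fst p \<le> N then (0::complex^'a::finite) $ snd p else 0) = (\<lambda>_. 0)"
    by (rule ext) (simp add: Finite_Cartesian_Product.zero_index)
  then show ?thesis by (simp add: Phi_def case_prod_unfold)
qed

lemma Lop_add: "Lop N lam Z (\<lambda>z. f z + g z) = (\<lambda>z. Lop N lam Z f z + Lop N lam Z g z)"
  unfolding Lop_def by (simp add: matrix_vector_right_distrib sum.distrib)

lemma Lop_smult: "Lop N lam Z (\<lambda>z. c *s f z) = (\<lambda>z. c *s Lop N lam Z f z)"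
  unfolding Lop_def by (simp add: vector_scalar_commute vsmult_sum)

context
  fixes \<rho> :: real and N :: nat and Z :: "(nat \<times> 'd::finite \<Rightarrow> complex) \<Rightarrow> complex^'d"
    and lam :: "'m::finite \<Rightarrow> complex" and cZ
  assumes rho: "\<rho> > 0" and repZ: "is_Arep \<rho> ({..N} \<times> UNIV) Z cZ" and Z0: "Z (\<lambda>_. 0) = 0"
    and lam1: "\<forall>k. cmod (lam k) \<le> 1"
begin

abbreviation "II \<equiv> {..N} \<times> (UNIV::'d set)"

lemma finII: "finite II" by simp

definition "S2 = infsum (\<lambda>\<beta>. norm (cZ \<beta>) * \<rho> ^ mdeg II \<beta>) (B2 II)"

lemma S2_nonneg: "0 \<le> S2"
  unfolding S2_def using rho by (intro infsum_nonneg mult_nonneg_nonneg) auto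

lemma lin_part: "(\<Sum>x\<in>II. (v (fst x) $ snd x) *s cZ (ue x)) = (\<Sum>i\<le>N. Bmat Z i *v v i)"
proof (subst vec_eq_iff, rule allI)
  fix j
  have "(\<Sum>x\<in>II. (v (fst x) $ snd x) *s cZ (ue x)) $ j = (\<Sum>x\<in>II. v (fst x) $ snd x * cZ (ue x) $ j)"
    by simp
  also have "\<dots> = (\<Sum>x\<in>II. Bmat Z (fst x) $ j $ snd x * v (fst x) $ snd x)"
  proof (rule sum.cong[OF refl])
    fix x assume x: "x \<in> II"
    obtain i k where ik: "x = (i,k)" by (cases x)
    have "Bmat Z i $ j $ k = cZ (ue (i,k)) $ j"
      by (rule Bmat_eq[OF finII rho repZ Z0]) (use x ik in auto)
    then show "v (fst x) $ snd x * cZ (ue x) $ j = Bmat Z (fst x) $ j $ snd x * v (fst x) $ snd x"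
      using ik by simp
  qed
  also have "\<dots> = (\<Sum>i\<le>N. \<Sum>k\<in>UNIV. Bmat Z i $ j $ k * v i $ k)"
    by (simp add: sum.cartesian_product case_prod_beta)
  also have "\<dots> = (\<Sum>i\<le>N. Bmat Z i *v v i) $ j"
    by (simp add: matrix_vector_mult_def)
  finally show "(\<Sum>x\<in>II. (v (fst x) $ snd x) *s cZ (ue x)) $ j = (\<Sum>i\<le>N. Bmat Z i *v v i) $ j" .
qed

lemma pow_bound:
  assumes "0 \<le> n" "n \<le> \<rho>" "2 \<le> m"
  shows "n ^ m \<le> (n/\<rho>)^2 * \<rho>^m"
proof -
  have "n ^ m = n^2 * n^(m-2)" using assms by (metis le_add_diff_inverse power_add)
  also have "\<dots> \<le> n^2 * \<rho>^(m-2)" using assms by (intro mult_left_mono power_mono) auto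
  also have "\<dots> = (n/\<rho>)^2 * \<rho>^m"
  proof -
    have "\<rho>^m = \<rho>^2 * \<rho>^(m-2)" using assms by (metis le_add_diff_inverse power_add)
    then show ?thesis using rho by (simp add: power_divide field_simps)
  qed
  finally show ?thesis .
qed

lemma Lop_deriv:
  assumes h: "inX h" and nsmall: "real CARD('d) * normX h \<le> \<rho>"
  shows "\<exists>G. xrep G (\<lambda>z. Phi N lam Z h z - Phi N lam Z (\<lambda>_. 0) z - Lop N lam Z h z) \<and>
             infsum (\<lambda>\<gamma>. norm (G \<gamma>)) UNIV \<le> (real CARD('d) * normX h / \<rho>)^2 * S2"
proof -
  define c where "c = coefX h"
  have hc: "xrep c h" unfolding c_def by (rule xrep_coef[OF h])
  define n where "n = real CARD('d) * normX h"
  have n0: "0 \<le> n" unfolding n_def using normX_nonneg[OF hc] by simp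
  have nr: "n \<le> \<rho>" unfolding n_def by (rule nsmall)
  have nh: "infsum (\<lambda>\<alpha>. norm (c \<alpha>)) UNIV \<le> n" unfolding n_def by (rule sum_norm_le_normX[OF hc])
  have sc0: "(\<lambda>\<alpha>. norm (c \<alpha>)) summable_on UNIV" using hc unfolding xrep_def by auto
  define a where "a x \<alpha> = lampow lam \<alpha> ^ fst x * c \<alpha> $ snd x" for x :: "nat \<times> 'd" and \<alpha>
  define u where "u x z = h (\<lambda>k. lam k ^ fst x * z k) $ snd x" for x :: "nat \<times> 'd" and z
  have ab: "cmod (a x \<alpha>) \<le> norm (c \<alpha>)" for x \<alpha>
  proof -
    have "cmod (lampow lam \<alpha> ^ fst x) \<le> 1"
      using lampow_bound[OF lam1] by (simp add: norm_power power_le_one)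
    moreover have "cmod (c \<alpha> $ snd x) \<le> norm (c \<alpha>)" by (rule Finite_Cartesian_Product.norm_nth_le)
    ultimately have "cmod (lampow lam \<alpha> ^ fst x) * cmod (c \<alpha> $ snd x) \<le> 1 * norm (c \<alpha>)"
      by (intro mult_mono) auto
    then show ?thesis unfolding a_def norm_mult mult_1_left .
  qed
  have sa: "(\<lambda>\<alpha>. cmod (a x \<alpha>)) summable_on UNIV" for x
    by (rule summable_on_comparison_test[OF sc0]) (auto simp: ab)
  have an: "infsum (\<lambda>\<alpha>. cmod (a x \<alpha>)) UNIV \<le> n" for x
  proof -
    have "infsum (\<lambda>\<alpha>. cmod (a x \<alpha>)) UNIV \<le> infsum (\<lambda>\<alpha>. norm (c \<alpha>)) UNIV"
      by (rule infsum_mono[OF sa sc0 ab])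
    then show ?thesis using nh by simp
  qed
  have ua: "((\<lambda>\<alpha>. mon UNIV z \<alpha> * a x \<alpha>) has_sum u x z) UNIV" if z: "\<forall>i. cmod (z i) \<le> 1" for x z
  proof -
    have "((\<lambda>\<alpha>. mon UNIV z \<alpha> *s ((lampow lam \<alpha>)^(fst x) *s c \<alpha>)) has_sum h (\<lambda>k. lam k ^ fst x * z k)) UNIV"
      using xrep_scaled[OF lam1 hc, of "fst x"] z unfolding xrep_def by auto
    from has_sum_nth[OF this, of "snd x"] show ?thesis by (simp add: a_def u_def mult.assoc)
  qed
  have sc: "(\<lambda>\<beta>. norm (cZ \<beta>) * n ^ mdeg II \<beta>) summable_on B2 II"
  proof (rule summable_on_comparison_test)
    show "(\<lambda>\<beta>. norm (cZ \<beta>) * \<rho> ^ mdeg II \<beta>) summable_on B2 II"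
      by (rule summable_on_subset[OF cZ_norm_summable[OF finII rho repZ Z0]]) (auto simp: B2_def)
    show "norm (cZ \<beta>) * n ^ mdeg II \<beta> \<le> norm (cZ \<beta>) * \<rho> ^ mdeg II \<beta>" for \<beta>
      by (rule mult_left_mono[OF power_mono[OF nr n0] norm_ge_zero])
    show "0 \<le> norm (cZ \<beta>) * n ^ mdeg II \<beta>" for \<beta>
      by (rule mult_nonneg_nonneg[OF norm_ge_zero zero_le_power[OF n0]])
  qed
  have ex: "\<exists>G. xrep G (\<lambda>z. infsum (\<lambda>\<beta>. mon II (\<lambda>x. u x z) \<beta> *s cZ \<beta>) (B2 II)) \<and>
       infsum (\<lambda>\<gamma>. norm (G \<gamma>)) UNIV \<le> infsum (\<lambda>\<beta>. norm (cZ \<beta>) * n ^ mdeg II \<beta>) (B2 II)"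
  proof (rule composition[where I=II and B="B2 II" and cZ=cZ and a=a and u=u and n=n])
    show "finite II" by (rule finII)
    show "(\<lambda>\<alpha>. cmod (a x \<alpha>)) summable_on UNIV" for x by (rule sa)
    show "infsum (\<lambda>\<alpha>. cmod (a x \<alpha>)) UNIV \<le> n" for x by (rule an)
    show "((\<lambda>\<alpha>. mon UNIV z \<alpha> * a x \<alpha>) has_sum u x z) UNIV" if "\<forall>i. cmod (z i) \<le> 1" for x z
      by (rule ua[OF that])
    show "(\<lambda>\<beta>. norm (cZ \<beta>) * n ^ mdeg II \<beta>) summable_on B2 II" by (rule sc)
  qed
  then obtain G where G: "xrep G (\<lambda>z. infsum (\<lambda>\<beta>. mon II (\<lambda>x. u x z) \<beta> *s cZ \<beta>) (B2 II))"
      and Gb: "infsum (\<lambda>\<gamma>. norm (G \<gamma>)) UNIV \<le> infsum (\<lambda>\<beta>. norm (cZ \<beta>) * n ^ mdeg II \<beta>) (B2 II)"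
    by blast
  have Gb2: "infsum (\<lambda>\<beta>. norm (cZ \<beta>) * n ^ mdeg II \<beta>) (B2 II) \<le> (n/\<rho>)^2 * S2"
  proof -
    have s2: "(\<lambda>\<beta>. norm (cZ \<beta>) * \<rho> ^ mdeg II \<beta>) summable_on B2 II"
      by (rule summable_on_subset[OF cZ_norm_summable[OF finII rho repZ Z0]]) (auto simp: B2_def)
    have "infsum (\<lambda>\<beta>. norm (cZ \<beta>) * n ^ mdeg II \<beta>) (B2 II) \<le> infsum (\<lambda>\<beta>. (n/\<rho>)^2 * (norm (cZ \<beta>) * \<rho> ^ mdeg II \<beta>)) (B2 II)"
    proof (rule infsum_mono[OF sc summable_on_cmult_right[OF s2]])
      fix \<beta> assume "\<beta> \<in> B2 II"
      then have "2 \<le> mdeg II \<beta>" by (simp add: B2_def)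
      then have "n ^ mdeg II \<beta> \<le> (n/\<rho>)^2 * \<rho> ^ mdeg II \<beta>" by (rule pow_bound[OF n0 nr])
      then show "norm (cZ \<beta>) * n ^ mdeg II \<beta> \<le> (n/\<rho>)^2 * (norm (cZ \<beta>) * \<rho> ^ mdeg II \<beta>)"
        by (metis mult.left_commute mult_left_mono norm_ge_zero)
    qed
    also have "\<dots> = (n/\<rho>)^2 * S2" unfolding S2_def by (rule infsum_cmult_right) (use s2 in auto)
    finally show ?thesis .
  qed
  have eq: "eqX (\<lambda>z. infsum (\<lambda>\<beta>. mon II (\<lambda>x. u x z) \<beta> *s cZ \<beta>) (B2 II))
                (\<lambda>z. Phi N lam Z h z - Phi N lam Z (\<lambda>_. 0) z - Lop N lam Z h z)"
    unfolding eqX_def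
  proof
    fix z :: "'m \<Rightarrow> complex" assume "z \<in> polydisc 1 UNIV"
    then have z: "\<forall>i. cmod (z i) \<le> 1" by (simp add: polydisc_def)
    define w where "w = (\<lambda>(i, j). if i \<le> N then h (\<lambda>k. lam k ^ i * z k) $ j else 0)"
    have wx: "w x = u x z" if "x \<in> II" for x using that by (auto simp: w_def u_def)
    have wp: "w \<in> polydisc \<rho> II"
      unfolding polydisc_def
    proof (intro CollectI ballI)
      fix x assume x: "x \<in> II"
      have z': "\<forall>k. cmod (lam k ^ fst x * z k) \<le> 1"
      proof
        fix k
        have "cmod (lam k) ^ fst x \<le> 1" using lam1 by (simp add: power_le_one)
        then show "cmod (lam k ^ fst x * z k) \<le> 1" unfolding norm_mult norm_power
          using z by (simp add: mult_le_one)
      qed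
      have "cmod (w x) = cmod (h (\<lambda>k. lam k ^ fst x * z k) $ snd x)" using wx[OF x] by (simp add: u_def)
      also have "\<dots> \<le> norm (h (\<lambda>k. lam k ^ fst x * z k))" by (rule Finite_Cartesian_Product.norm_nth_le)
      also have "\<dots> \<le> infsum (\<lambda>\<alpha>. norm (c \<alpha>)) UNIV" by (rule xrep_value_bound[OF hc z'])
      also have "\<dots> \<le> \<rho>" using nh nr by simp
      finally show "cmod (w x) \<le> \<rho>" .
    qed
    have "Phi N lam Z h z = Z w" by (simp add: Phi_def w_def)
    also have "\<dots> = (\<Sum>x\<in>II. w x *s cZ (ue x)) + infsum (\<lambda>\<beta>. mon II w \<beta> *s cZ \<beta>) (B2 II)"
      by (rule Z_split[OF finII rho repZ Z0 wp])
    also have "(\<Sum>x\<in>II. w x *s cZ (ue x)) = (\<Sum>x\<in>II. (h (\<lambda>k. lam k ^ fst x * z k) $ snd x) *s cZ (ue x))"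
      by (rule sum.cong) (auto simp: wx u_def)
    also have "\<dots> = Lop N lam Z h z"
      unfolding Lop_def by (rule lin_part[of "\<lambda>i. h (\<lambda>k. lam k ^ i * z k)"])
    also have "infsum (\<lambda>\<beta>. mon II w \<beta> *s cZ \<beta>) (B2 II) = infsum (\<lambda>\<beta>. mon II (\<lambda>x. u x z) \<beta> *s cZ \<beta>) (B2 II)"
    proof -
      have "mon II w \<beta> = mon II (\<lambda>x. u x z) \<beta>" for \<beta> unfolding mon_def by (rule prod.cong) (auto simp: wx)
      then show ?thesis by simp
    qed
    finally have "Phi N lam Z h z = Lop N lam Z h z + infsum (\<lambda>\<beta>. mon II (\<lambda>x. u x z) \<beta> *s cZ \<beta>) (B2 II)" .
    then show "infsum (\<lambda>\<beta>. mon II (\<lambda>x. u x z) \<beta> *s cZ \<beta>) (B2 II) = Phi N lam Z h z - Phi N lam Z (\<lambda>_. 0) z - Lop N lam Z h z"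
      by (simp add: Phi_zero Z0)
  qed
  have "xrep G (\<lambda>z. Phi N lam Z h z - Phi N lam Z (\<lambda>_. 0) z - Lop N lam Z h z)"
    using G eqX_xrep[OF eq] by simp
  moreover have "infsum (\<lambda>\<gamma>. norm (G \<gamma>)) UNIV \<le> (real CARD('d) * normX h / \<rho>)^2 * S2"
    using Gb Gb2 unfolding n_def by simp
  ultimately show ?thesis by blast
qed

lemma Lop_bounded: "bounded_linX (Lop N lam Z)"
  unfolding bounded_linX_def
proof (intro conjI allI impI)
  fix f :: "('m \<Rightarrow> complex) \<Rightarrow> complex^'d" assume "inX f"
  then show "inX (Lop N lam Z f)" using xrep_inX xrep_Lop[OF lam1 xrep_coef] by blast
next
  fix f g :: "('m \<Rightarrow> complex) \<Rightarrow> complex^'d"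
  show "eqX (Lop N lam Z (\<lambda>z. f z + g z)) (\<lambda>z. Lop N lam Z f z + Lop N lam Z g z)"
    by (simp add: Lop_add eqX_refl)
next
  fix c and f :: "('m \<Rightarrow> complex) \<Rightarrow> complex^'d"
  show "eqX (Lop N lam Z (\<lambda>z. c *s f z)) (\<lambda>z. c *s Lop N lam Z f z)"
    by (simp add: Lop_smult eqX_refl)
next
  show "\<exists>C. \<forall>f. inX f \<longrightarrow> normX (Lop N lam Z f) \<le> C * normX f"
  proof (intro exI allI impI)
    fix f :: "('m \<Rightarrow> complex) \<Rightarrow> complex^'d" assume f: "inX f"
    have fc: "xrep (coefX f) f" by (rule xrep_coef[OF f])
    have r: "xrep (\<lambda>\<alpha>. Tmat N Z (lampow lam \<alpha>) *v coefX f \<alpha>) (Lop N lam Z f)" by (rule xrep_Lop[OF lam1 fc])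
    have s1: "(\<lambda>\<alpha>. norm (coefX f \<alpha>)) summable_on UNIV" using fc unfolding xrep_def by auto
    have "normX (Lop N lam Z f) \<le> infsum (\<lambda>\<alpha>. norm (Tmat N Z (lampow lam \<alpha>) *v coefX f \<alpha>)) UNIV"
      by (rule normX_le_sum_norm[OF r])
    also have "\<dots> \<le> infsum (\<lambda>\<alpha>. KT N Z * norm (coefX f \<alpha>)) UNIV"
      by (rule infsum_mono) (use r s1 in \<open>auto simp: xrep_def intro: summable_on_cmult_right Tmat_bound lampow_bound[OF lam1]\<close>)
    also have "\<dots> = KT N Z * infsum (\<lambda>\<alpha>. norm (coefX f \<alpha>)) UNIV"
      by (rule infsum_cmult_right) (use s1 in auto)
    also have "\<dots> \<le> KT N Z * (real CARD('d) * normX f)"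
      by (intro mult_left_mono KT_nonneg sum_norm_le_normX[OF fc])
    finally show "normX (Lop N lam Z f) \<le> (KT N Z * real CARD('d)) * normX f" by simp
  qed
qed

lemma Lop_DPhi0: "is_DPhi0 (Phi N lam Z) (Lop N lam Z)"
  unfolding is_DPhi0_def
proof (intro conjI Lop_bounded allI impI)
  fix \<epsilon> :: real assume e: "\<epsilon> > 0"
  define C where "C = real CARD('d)"
  have C1: "C \<ge> 1" unfolding C_def by simp
  define K2 where "K2 = C^2 * S2 / \<rho>^2"
  have K2: "0 \<le> K2" unfolding K2_def using S2_nonneg by simp
  define \<delta> where "\<delta> = min (\<rho> / C) (\<epsilon> / (K2 + 1))"
  have dpos: "\<delta> > 0" unfolding \<delta>_def using rho C1 e K2 by simp
  show "\<exists>\<delta>>0. \<forall>h. inX h \<and> normX h < \<delta> \<longrightarrow>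
          normX (\<lambda>z. Phi N lam Z h z - Phi N lam Z (\<lambda>_. 0) z - Lop N lam Z h z) \<le> \<epsilon> * normX h"
  proof (intro exI[of _ \<delta>] conjI dpos allI impI)
    fix h :: "('m \<Rightarrow> complex) \<Rightarrow> complex^'d" assume hh: "inX h \<and> normX h < \<delta>"
    have h0: "0 \<le> normX h" using normX_nonneg[OF xrep_coef] hh by blast
    have "normX h < \<rho> / C" using hh unfolding \<delta>_def by simp
    then have small: "C * normX h \<le> \<rho>" using C1 by (simp add: field_simps)
    obtain G where G: "xrep G (\<lambda>z. Phi N lam Z h z - Phi N lam Z (\<lambda>_. 0) z - Lop N lam Z h z)"
        and Gb: "infsum (\<lambda>\<gamma>. norm (G \<gamma>)) UNIV \<le> (C * normX h / \<rho>)^2 * S2"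
      using Lop_deriv[of h] hh small unfolding C_def by blast
    have "normX (\<lambda>z. Phi N lam Z h z - Phi N lam Z (\<lambda>_. 0) z - Lop N lam Z h z) \<le> (C * normX h / \<rho>)^2 * S2"
      using normX_le_sum_norm[OF G] Gb by simp
    also have "\<dots> = (K2 * normX h) * normX h" unfolding K2_def using rho by (simp add: power2_eq_square field_simps)
    also have "\<dots> \<le> \<epsilon> * normX h"
    proof (rule mult_right_mono[OF _ h0])
      have "normX h \<le> \<epsilon> / (K2 + 1)" using hh unfolding \<delta>_def by simp
      then have "K2 * normX h \<le> K2 * (\<epsilon> / (K2 + 1))" using K2 by (rule mult_left_mono)
      also have "\<dots> \<le> \<epsilon>" using K2 e by (simp add: field_simps)
      finally show "K2 * normX h \<le> \<epsilon>" .
    qed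
    finally show "normX (\<lambda>z. Phi N lam Z h z - Phi N lam Z (\<lambda>_. 0) z - Lop N lam Z h z) \<le> \<epsilon> * normX h" .
  qed
qed

end

lemma matrix_inv_props:
  fixes A :: "complex^'n::finite^'n"
  assumes "det A \<noteq> 0"
  shows "A ** matrix_inv A = mat 1" "matrix_inv A ** A = mat 1"
proof -
  have "invertible A" using assms by (simp add: invertible_det_nz)
  then have "\<exists>A'. A ** A' = mat 1 \<and> A' ** A = mat 1" unfolding invertible_def by blast
  then have "A ** matrix_inv A = mat 1 \<and> matrix_inv A ** A = mat 1"
    unfolding matrix_inv_def by (rule someI_ex)
  then show "A ** matrix_inv A = mat 1" "matrix_inv A ** A = mat 1" by auto
qed

lemma matrix_inv_right:
  fixes A :: "complex^'n::finite^'n"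
  assumes "det A \<noteq> 0"
  shows "A *v (matrix_inv A *v v) = v"
  by (simp add: matrix_vector_mul_assoc matrix_inv_props[OF assms])

lemma matrix_inv_left:
  fixes A :: "complex^'n::finite^'n"
  assumes "det A \<noteq> 0"
  shows "matrix_inv A *v (A *v v) = v"
  by (simp add: matrix_vector_mul_assoc matrix_inv_props[OF assms])

lemma Tmat_zero: "Tmat N Z 0 = Bmat Z 0"
proof -
  have "(\<Sum>i\<le>N. (0::complex) ^ i * Bmat Z i $ j $ k) = Bmat Z 0 $ j $ k" for j k
  proof -
    have "(\<Sum>i\<le>N. (0::complex) ^ i * Bmat Z i $ j $ k) = (\<Sum>i\<le>N. if i = 0 then Bmat Z i $ j $ k else 0)"
      by (rule sum.cong) (auto simp: power_0_left)
    also have "\<dots> = Bmat Z 0 $ j $ k" by (simp add: sum.delta)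
    finally show ?thesis .
  qed
  then show ?thesis by (simp add: Tmat_def vec_eq_iff)
qed

lemma Tmat_diff_bound:
  assumes "cmod \<mu> \<le> 1"
  shows "norm (Tmat N Z \<mu> *v y - Bmat Z 0 *v y) \<le> cmod \<mu> * KT N Z * norm y"
proof -
  have "Tmat N Z \<mu> *v y - Bmat Z 0 *v y = Tmat N Z \<mu> *v y - Tmat N Z 0 *v y" by (simp add: Tmat_zero)
  also have "\<dots> = (\<Sum>i\<le>N. Bmat Z i *v ((\<mu>^i - 0^i) *s y))"
    by (simp add: Tmat_mv sum_subtractf[symmetric] matrix_vector_mult_diff_distrib[symmetric] vector_sub_rdistrib)
  finally have eq: "Tmat N Z \<mu> *v y - Bmat Z 0 *v y = (\<Sum>i\<le>N. Bmat Z i *v ((\<mu>^i - 0^i) *s y))" .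
  have "norm (\<Sum>i\<le>N. Bmat Z i *v ((\<mu>^i - 0^i) *s y)) \<le> (\<Sum>i\<le>N. norm (Bmat Z i *v ((\<mu>^i - 0^i) *s y)))"
    by (rule norm_sum)
  also have "\<dots> \<le> (\<Sum>i\<le>N. mnorm (Bmat Z i) * (cmod \<mu> * norm y))"
  proof (rule sum_mono)
    fix i
    have c: "cmod (\<mu>^i - 0^i) \<le> cmod \<mu>"
    proof (cases i)
      case 0 then show ?thesis by simp
    next
      case (Suc j)
      then have "cmod (\<mu>^i - 0^i) = cmod \<mu> * cmod \<mu> ^ j" by (simp add: norm_mult norm_power)
      also have "\<dots> \<le> cmod \<mu> * 1" using assms by (intro mult_left_mono power_le_one) auto
      finally show ?thesis by simp
    qed
    have "norm (Bmat Z i *v ((\<mu>^i - 0^i) *s y)) \<le> mnorm (Bmat Z i) * norm ((\<mu>^i - 0^i) *s y)" by (rule norm_mv_le)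
    also have "\<dots> \<le> mnorm (Bmat Z i) * (cmod \<mu> * norm y)"
      by (intro mult_left_mono mnorm_nonneg) (simp only: norm_vsmult, rule mult_right_mono[OF c norm_ge_zero])
    finally show "norm (Bmat Z i *v ((\<mu>^i - 0^i) *s y)) \<le> mnorm (Bmat Z i) * (cmod \<mu> * norm y)" .
  qed
  also have "\<dots> = (\<Sum>i\<le>N. mnorm (Bmat Z i)) * (cmod \<mu> * norm y)" by (rule sum_distrib_right[symmetric])
  also have "\<dots> = cmod \<mu> * KT N Z * norm y" by (simp add: KT_def)
  finally show ?thesis using eq by simp
qed

lemma inv_bound_small:
  assumes B0: "det (Bmat Z 0) \<noteq> 0" and dT: "det (Tmat N Z \<mu>) \<noteq> 0"
    and mu: "cmod \<mu> \<le> 1" "cmod \<mu> * (mnorm (matrix_inv (Bmat Z 0)) * KT N Z) \<le> 1/2"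
  shows "norm (matrix_inv (Tmat N Z \<mu>) *v v) \<le> 2 * mnorm (matrix_inv (Bmat Z 0)) * norm v"
proof -
  define y where "y = matrix_inv (Tmat N Z \<mu>) *v v"
  define Bi where "Bi = matrix_inv (Bmat Z 0)"
  have Ty: "Tmat N Z \<mu> *v y = v" unfolding y_def by (rule matrix_inv_right[OF dT])
  have "y = Bi *v (Bmat Z 0 *v y)" unfolding Bi_def by (rule matrix_inv_left[OF B0, symmetric])
  also have "Bmat Z 0 *v y = v - (Tmat N Z \<mu> *v y - Bmat Z 0 *v y)" using Ty by simp
  finally have "y = Bi *v v - Bi *v (Tmat N Z \<mu> *v y - Bmat Z 0 *v y)"
    by (simp add: matrix_vector_mult_diff_distrib)
  then have "norm y \<le> norm (Bi *v v) + norm (Bi *v (Tmat N Z \<mu> *v y - Bmat Z 0 *v y))"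
    by (metis norm_triangle_ineq4)
  also have "\<dots> \<le> mnorm Bi * norm v + mnorm Bi * (cmod \<mu> * KT N Z * norm y)"
    by (intro add_mono norm_mv_le order_trans[OF norm_mv_le] mult_left_mono mnorm_nonneg Tmat_diff_bound mu(1))
  finally have y1: "norm y \<le> mnorm Bi * norm v + mnorm Bi * (cmod \<mu> * KT N Z * norm y)" .
  have "mnorm Bi * (cmod \<mu> * KT N Z * norm y) = (cmod \<mu> * (mnorm Bi * KT N Z)) * norm y" by simp
  also have "\<dots> \<le> 1/2 * norm y" using mu(2) unfolding Bi_def by (intro mult_right_mono) auto
  finally have "norm y \<le> mnorm Bi * norm v + 1/2 * norm y" using y1 by linarith
  then show ?thesis unfolding y_def Bi_def by simp
qed

lemma lampow_le_pow:
  assumes "\<forall>k. cmod (lam k) \<le> r" "0 \<le> r"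
  shows "cmod (lampow lam \<alpha>) \<le> r ^ mdeg UNIV \<alpha>"
  unfolding lampow_def mdeg_def prod_norm[symmetric] power_sum
  by (rule prod_mono) (use assms in \<open>auto simp: norm_power intro: power_mono\<close>)

lemma inverse_bound:
  fixes lam :: "'m::finite \<Rightarrow> complex" and Z :: "(nat \<times> 'd::finite \<Rightarrow> complex) \<Rightarrow> complex^'d"
  assumes lam: "\<forall>k. cmod (lam k) < 1" and B0: "det (Bmat Z 0) \<noteq> 0"
    and dT: "\<And>\<alpha>. 2 \<le> mdeg UNIV \<alpha> \<Longrightarrow> det (Tmat N Z (lampow lam \<alpha>)) \<noteq> 0"
  shows "\<exists>C\<ge>0. \<forall>\<alpha> v. 2 \<le> mdeg UNIV \<alpha> \<longrightarrow> norm (matrix_inv (Tmat N Z (lampow lam \<alpha>)) *v v) \<le> C * norm v"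
proof -
  define Bi where "Bi = matrix_inv (Bmat Z 0)"
  define r where "r = Max (range (\<lambda>k. cmod (lam k)))"
  have r1: "r < 1" unfolding r_def using lam by (subst Max_less_iff) auto
  have r0: "0 \<le> r" unfolding r_def by (rule order_trans[OF norm_ge_zero Max_ge]) auto
  have rl: "\<forall>k. cmod (lam k) \<le> r" unfolding r_def by (auto intro: Max_ge)
  define \<delta>0 where "\<delta>0 = 1 / (2 * (mnorm Bi * KT N Z + 1))"
  have Kpos: "0 \<le> mnorm Bi * KT N Z" by (intro mult_nonneg_nonneg mnorm_nonneg KT_nonneg)
  have d0: "0 < \<delta>0" unfolding \<delta>0_def using Kpos by simp
  obtain K where K: "r ^ K < \<delta>0"
    using real_arch_pow_inv[OF d0 r1] by blast
  define A where "A = {\<alpha>::'m \<Rightarrow> nat. mdeg UNIV \<alpha> < K}"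
  have finA: "finite A"
  proof (rule finite_subset)
    show "A \<subseteq> PiE UNIV (\<lambda>_. {..<K})"
    proof
      fix \<alpha> assume "\<alpha> \<in> A"
      then have "\<alpha> i < K" for i
        using member_le_sum[of i UNIV \<alpha>] unfolding A_def mdeg_def by fastforce
      then show "\<alpha> \<in> PiE UNIV (\<lambda>_. {..<K})" by (simp add: PiE_UNIV_domain)
    qed
    show "finite (PiE UNIV (\<lambda>_::'m. {..<K}))" by (rule finite_PiE) auto
  qed
  define C where "C = 2 * mnorm Bi + (\<Sum>\<alpha>\<in>A. mnorm (matrix_inv (Tmat N Z (lampow lam \<alpha>))))"
  have Cs: "mnorm (matrix_inv (Tmat N Z (lampow lam \<alpha>))) \<le> C" if "\<alpha> \<in> A" for \<alpha>
  proof -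
    have "mnorm (matrix_inv (Tmat N Z (lampow lam \<alpha>))) \<le> (\<Sum>\<alpha>\<in>A. mnorm (matrix_inv (Tmat N Z (lampow lam \<alpha>))))"
      by (rule member_le_sum[OF that]) (auto intro: mnorm_nonneg finA)
    then show ?thesis unfolding C_def using mnorm_nonneg[of Bi] by simp
  qed
  have C0: "0 \<le> C" unfolding C_def by (intro add_nonneg_nonneg mult_nonneg_nonneg sum_nonneg mnorm_nonneg) auto
  show ?thesis
  proof (intro exI[of _ C] conjI C0 allI impI)
    fix \<alpha> :: "'m \<Rightarrow> nat" and v assume a2: "2 \<le> mdeg UNIV \<alpha>"
    show "norm (matrix_inv (Tmat N Z (lampow lam \<alpha>)) *v v) \<le> C * norm v"
    proof (cases "\<alpha> \<in> A")
      case True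
      have "norm (matrix_inv (Tmat N Z (lampow lam \<alpha>)) *v v) \<le> mnorm (matrix_inv (Tmat N Z (lampow lam \<alpha>))) * norm v"
        by (rule norm_mv_le)
      also have "\<dots> \<le> C * norm v" by (intro mult_right_mono Cs True) simp
      finally show ?thesis .
    next
      case False
      then have "K \<le> mdeg UNIV \<alpha>" unfolding A_def by simp
      have sm: "cmod (lampow lam \<alpha>) \<le> \<delta>0"
      proof -
        have "cmod (lampow lam \<alpha>) \<le> r ^ mdeg UNIV \<alpha>" by (rule lampow_le_pow[OF rl r0])
        also have "\<dots> \<le> r ^ K" using r0 r1 \<open>K \<le> mdeg UNIV \<alpha>\<close> by (intro power_decreasing) auto
        finally show ?thesis using K by simp
      qed
      have m1: "cmod (lampow lam \<alpha>) \<le> 1" by (rule lampow_bound) (use lam in \<open>auto intro: less_imp_le\<close>)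
      have m2: "cmod (lampow lam \<alpha>) * (mnorm Bi * KT N Z) \<le> 1/2"
      proof -
        have "cmod (lampow lam \<alpha>) * (mnorm Bi * KT N Z) \<le> \<delta>0 * (mnorm Bi * KT N Z)"
          by (intro mult_right_mono sm Kpos)
        also have "\<dots> \<le> 1/2" unfolding \<delta>0_def using Kpos by (simp add: field_simps)
        finally show ?thesis .
      qed
      have "norm (matrix_inv (Tmat N Z (lampow lam \<alpha>)) *v v) \<le> 2 * mnorm Bi * norm v"
        unfolding Bi_def by (rule inv_bound_small[OF B0 dT[OF a2] m1 m2[unfolded Bi_def]])
      also have "\<dots> \<le> C * norm v"
        unfolding C_def by (intro mult_right_mono) (auto intro: sum_nonneg mnorm_nonneg)
      finally show ?thesis .
    qed
  qed
qed

context
  fixes \<rho> :: real and N :: nat and Z :: "(nat \<times> 'd::finite \<Rightarrow> complex) \<Rightarrow> complex^'d"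
    and lam :: "'m::finite \<Rightarrow> complex" and cZ
  assumes rho: "\<rho> > 0" and repZ: "is_Arep \<rho> ({..N} \<times> UNIV) Z cZ" and Z0: "Z (\<lambda>_. 0) = 0"
    and lam1: "\<forall>k. cmod (lam k) \<le> 1"
begin

lemma key_small:
  assumes dL: "is_DPhi0 (Phi N lam Z) L" and e: "\<epsilon> > 0"
  shows "\<exists>\<delta>>0. \<forall>g. inX g \<and> normX g < \<delta> \<longrightarrow> normX (\<lambda>z. L g z - Lop N lam Z g z) \<le> \<epsilon> * normX g"
proof -
  have bL: "bounded_linX L" using dL by (simp add: is_DPhi0_def)
  have e2: "\<epsilon>/2 > 0" using e by simp
  obtain \<delta>1 where d1: "\<delta>1 > 0" and
    h1: "\<And>g. inX g \<and> normX g < \<delta>1 \<Longrightarrow> normX (\<lambda>z. Phi N lam Z g z - Phi N lam Z (\<lambda>_. 0) z - L g z) \<le> \<epsilon>/2 * normX g"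
    using dL e2 unfolding is_DPhi0_def by blast
  obtain \<delta>2 where d2: "\<delta>2 > 0" and
    h2: "\<And>g. inX g \<and> normX g < \<delta>2 \<Longrightarrow> normX (\<lambda>z. Phi N lam Z g z - Phi N lam Z (\<lambda>_. 0) z - Lop N lam Z g z) \<le> \<epsilon>/2 * normX g"
    using Lop_DPhi0[OF rho repZ Z0 lam1] e2 unfolding is_DPhi0_def by blast
  define C where "C = real CARD('d)"
  have C1: "C \<ge> 1" unfolding C_def by simp
  define \<delta> where "\<delta> = min (min \<delta>1 \<delta>2) (\<rho> / C)"
  have dpos: "\<delta> > 0" unfolding \<delta>_def using d1 d2 rho C1 by simp
  show ?thesis
  proof (intro exI[of _ \<delta>] conjI dpos allI impI)
    fix g :: "('m \<Rightarrow> complex) \<Rightarrow> complex^'d" assume gg: "inX g \<and> normX g < \<delta>"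
    have g: "inX g" using gg by simp
    have "normX g < \<rho> / C" using gg unfolding \<delta>_def by simp
    then have small: "real CARD('d) * normX g \<le> \<rho>" using C1 unfolding C_def by (simp add: field_simps)
    obtain G where G: "xrep G (\<lambda>z. Phi N lam Z g z - Phi N lam Z (\<lambda>_. 0) z - Lop N lam Z g z)"
      using Lop_deriv[OF rho repZ Z0 lam1 g small] by blast
    have cL: "xrep (coefX (L g)) (L g)" using bL g unfolding bounded_linX_def by (blast intro: xrep_coef)
    have cO: "xrep (\<lambda>\<alpha>. Tmat N Z (lampow lam \<alpha>) *v coefX g \<alpha>) (Lop N lam Z g)"
      by (rule xrep_Lop[OF lam1 xrep_coef[OF g]])
    define A where "A = (\<lambda>z. Phi N lam Z g z - Phi N lam Z (\<lambda>_. 0) z - Lop N lam Z g z)"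
    define Bs where "Bs = (\<lambda>z. Phi N lam Z g z - Phi N lam Z (\<lambda>_. 0) z - L g z)"
    have xA: "xrep G A" using G unfolding A_def .
    have "xrep (\<lambda>\<alpha>. G \<alpha> + ((Tmat N Z (lampow lam \<alpha>) *v coefX g \<alpha>) - coefX (L g) \<alpha>)) (\<lambda>z. A z + (Lop N lam Z g z - L g z))"
      by (rule xrep_add[OF xA xrep_diff[OF cO cL]])
    moreover have "(\<lambda>z. A z + (Lop N lam Z g z - L g z)) = Bs" unfolding A_def Bs_def by (simp add: fun_eq_iff)
    ultimately obtain cB where xB: "xrep cB Bs" by auto
    have D: "(\<lambda>z. L g z - Lop N lam Z g z) = (\<lambda>z. A z + (-1) *s Bs z)"
      unfolding A_def Bs_def by (simp add: fun_eq_iff vector_sneg_minus1[symmetric])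
    have "normX (\<lambda>z. L g z - Lop N lam Z g z) \<le> normX A + normX (\<lambda>z. (-1) *s Bs z)"
      unfolding D by (rule normX_triangle[OF xA xrep_smult[OF xB]])
    also have "normX (\<lambda>z. (-1) *s Bs z) = normX Bs" using normX_smult[OF xB, of "-1"] by simp
    also have "normX A \<le> \<epsilon>/2 * normX g" unfolding A_def using h2 gg unfolding \<delta>_def by simp
    also have "normX Bs \<le> \<epsilon>/2 * normX g" unfolding Bs_def using h1 gg unfolding \<delta>_def by simp
    finally show "normX (\<lambda>z. L g z - Lop N lam Z g z) \<le> \<epsilon> * normX g" by simp
  qed
qed

lemma L_eq:
  assumes dL: "is_DPhi0 (Phi N lam Z) L" and h: "inX h"
  shows "eqX (L h) (Lop N lam Z h)"
proof -
  have bL: "bounded_linX L" using dL by (simp add: is_DPhi0_def)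
  have hc: "xrep (coefX h) h" by (rule xrep_coef[OF h])
  have cL: "xrep (coefX (L h)) (L h)" using bL h unfolding bounded_linX_def by (blast intro: xrep_coef)
  have cO: "xrep (\<lambda>\<alpha>. Tmat N Z (lampow lam \<alpha>) *v coefX h \<alpha>) (Lop N lam Z h)"
    by (rule xrep_Lop[OF lam1 hc])
  obtain cD where xD: "xrep cD (\<lambda>z. L h z - Lop N lam Z h z)" using xrep_diff[OF cL cO] by blast
  have h0: "0 \<le> normX h" by (rule normX_nonneg[OF hc])
  have bound: "normX (\<lambda>z. L h z - Lop N lam Z h z) \<le> \<epsilon> * normX h" if e: "\<epsilon> > 0" for \<epsilon>
  proof -
    obtain \<delta> where dpos: "\<delta> > 0" and
      hd: "\<And>g. inX g \<and> normX g < \<delta> \<Longrightarrow> normX (\<lambda>z. L g z - Lop N lam Z g z) \<le> \<epsilon> * normX g"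
      using key_small[OF dL e] by blast
    define t where "t = \<delta> / (2 * (normX h + 1))"
    have tpos: "t > 0" unfolding t_def using dpos h0 by simp
    define g where "g = (\<lambda>z. complex_of_real t *s h z)"
    have gx: "xrep (\<lambda>\<alpha>. complex_of_real t *s coefX h \<alpha>) g" unfolding g_def by (rule xrep_smult[OF hc])
    have ng: "normX g = t * normX h" unfolding g_def using normX_smult[OF hc, of "complex_of_real t"] tpos by simp
    have "t * normX h < \<delta>"
    proof -
      have "t * normX h = \<delta> * (normX h / (2 * (normX h + 1)))" unfolding t_def by simp
      also have "\<dots> < \<delta> * 1" using dpos h0 by (intro mult_strict_left_mono) (auto simp: field_simps)
      finally show ?thesis by simp
    qed
    then have "inX g \<and> normX g < \<delta>" using xrep_inX[OF gx] ng by simp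
    then have bnd: "normX (\<lambda>z. L g z - Lop N lam Z g z) \<le> \<epsilon> * normX g" by (rule hd)
    have eqv: "eqX (\<lambda>z. L g z - Lop N lam Z g z) (\<lambda>z. complex_of_real t *s (L h z - Lop N lam Z h z))"
    proof -
      have e1: "eqX (L g) (\<lambda>z. complex_of_real t *s L h z)"
        using bL h unfolding bounded_linX_def g_def by blast
      have e2: "Lop N lam Z g = (\<lambda>z. complex_of_real t *s Lop N lam Z h z)" unfolding g_def by (rule Lop_smult)
      show ?thesis using e1 unfolding eqX_def e2 by (simp add: vector_ssub_ldistrib)
    qed
    have neq1: "normX (\<lambda>z. L g z - Lop N lam Z g z) = normX (\<lambda>z. complex_of_real t *s (L h z - Lop N lam Z h z))"
      by (rule eqX_normX[OF eqv])
    have neq2: "normX (\<lambda>z. complex_of_real t *s (L h z - Lop N lam Z h z)) = t * normX (\<lambda>z. L h z - Lop N lam Z h z)"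
      using normX_smult[OF xD, of "complex_of_real t"] tpos by (simp only: norm_of_real abs_of_pos)
    have "t * normX (\<lambda>z. L h z - Lop N lam Z h z) \<le> t * (\<epsilon> * normX h)"
    proof -
      have "t * normX (\<lambda>z. L h z - Lop N lam Z h z) \<le> \<epsilon> * (t * normX h)" using bnd neq1 neq2 ng by simp
      also have "\<epsilon> * (t * normX h) = t * (\<epsilon> * normX h)" by (simp add: mult.left_commute)
      finally show ?thesis .
    qed
    then show ?thesis using tpos by simp
  qed
  have n0: "normX (\<lambda>z. L h z - Lop N lam Z h z) = 0"
  proof (rule ccontr)
    assume ne: "normX (\<lambda>z. L h z - Lop N lam Z h z) \<noteq> 0"
    define x where "x = normX (\<lambda>z. L h z - Lop N lam Z h z)"
    have xpos: "x > 0" using ne normX_nonneg[OF xD] unfolding x_def by simp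
    have "x \<le> x / (2 * (normX h + 1)) * normX h"
      unfolding x_def using bound[of "x / (2 * (normX h + 1))"] xpos h0 unfolding x_def by simp
    also have "\<dots> = x * (normX h / (2 * (normX h + 1)))" by simp
    also have "\<dots> < x * 1" using xpos h0 by (intro mult_strict_left_mono) (auto simp: field_simps)
    finally show False by simp
  qed
  have "eqX (\<lambda>z. L h z - Lop N lam Z h z) (\<lambda>_. 0)" by (rule normX_zero_eqX[OF xD n0])
  then show ?thesis unfolding eqX_def by simp
qed

lemma coef_L:
  assumes dL: "is_DPhi0 (Phi N lam Z) L" and P: "inX P"
  shows "coefX (L P) = (\<lambda>\<alpha>. Tmat N Z (lampow lam \<alpha>) *v coefX P \<alpha>)"
proof -
  have "coefX (L P) = coefX (Lop N lam Z P)" by (rule eqX_coefX[OF L_eq[OF dL P]])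
  also have "\<dots> = (\<lambda>\<alpha>. Tmat N Z (lampow lam \<alpha>) *v coefX P \<alpha>)"
    by (rule xrep_coefX[OF xrep_Lop[OF lam1 xrep_coef[OF P]]])
  finally show ?thesis .
qed

lemma inX_L: "is_DPhi0 (Phi N lam Z) L \<Longrightarrow> inX P \<Longrightarrow> inX (L P)"
  unfolding is_DPhi0_def bounded_linX_def by blast

end

definition Mc :: "nat \<Rightarrow> ('m::finite \<Rightarrow> complex) \<Rightarrow> ((nat \<times> 'd::finite \<Rightarrow> complex) \<Rightarrow> complex ^ 'd)
    \<Rightarrow> (('m \<Rightarrow> complex) \<Rightarrow> complex ^ 'd) \<Rightarrow> ('m \<Rightarrow> nat) \<Rightarrow> complex^'d" where
  "Mc N lam Z \<phi> \<alpha> = (if 2 \<le> mdeg UNIV \<alpha> then matrix_inv (Tmat N Z (lampow lam \<alpha>)) *v coefX \<phi> \<alpha> else 0)"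

definition Mop :: "nat \<Rightarrow> ('m::finite \<Rightarrow> complex) \<Rightarrow> ((nat \<times> 'd::finite \<Rightarrow> complex) \<Rightarrow> complex ^ 'd)
    \<Rightarrow> (('m \<Rightarrow> complex) \<Rightarrow> complex ^ 'd) \<Rightarrow> (('m \<Rightarrow> complex) \<Rightarrow> complex ^ 'd)" where
  "Mop N lam Z \<phi> = (\<lambda>z. infsum (\<lambda>\<alpha>. mon UNIV z \<alpha> *s Mc N lam Z \<phi> \<alpha>) UNIV)"

lemma xrep_Mop:
  fixes \<phi> :: "('m::finite \<Rightarrow> complex) \<Rightarrow> complex^'d::finite"
    and Z :: "(nat \<times> 'd \<Rightarrow> complex) \<Rightarrow> complex^'d" and lam :: "'m \<Rightarrow> complex"
  assumes C0: "0 \<le> C" and Cb: "\<forall>\<alpha> v. 2 \<le> mdeg UNIV \<alpha> \<longrightarrow> norm (matrix_inv (Tmat N Z (lampow lam \<alpha>)) *v v) \<le> C * norm v"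
    and \<phi>: "inX \<phi>"
  shows "xrep (Mc N lam Z \<phi>) (Mop N lam Z \<phi>)"
    and "normX (Mop N lam Z \<phi>) \<le> C * real CARD('d) * normX \<phi>"
proof -
  have pc: "xrep (coefX \<phi>) \<phi>" by (rule xrep_coef[OF \<phi>])
  have s1: "(\<lambda>\<alpha>. norm (coefX \<phi> \<alpha>)) summable_on UNIV" using pc unfolding xrep_def by auto
  have mb: "norm (Mc N lam Z \<phi> \<alpha>) \<le> C * norm (coefX \<phi> \<alpha>)" for \<alpha>
    unfolding Mc_def using Cb C0 by auto
  have s2: "(\<lambda>\<alpha>. norm (Mc N lam Z \<phi> \<alpha>)) summable_on UNIV"
    by (rule summable_on_comparison_test[OF summable_on_cmult_right[OF s1, where c=C]]) (auto simp: mb)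
  show xr: "xrep (Mc N lam Z \<phi>) (Mop N lam Z \<phi>)" unfolding Mop_def by (rule xrep_of_summable[OF s2])
  have "normX (Mop N lam Z \<phi>) \<le> infsum (\<lambda>\<alpha>. norm (Mc N lam Z \<phi> \<alpha>)) UNIV" by (rule normX_le_sum_norm[OF xr])
  also have "\<dots> \<le> infsum (\<lambda>\<alpha>. C * norm (coefX \<phi> \<alpha>)) UNIV"
    by (rule infsum_mono[OF s2 summable_on_cmult_right[OF s1, where c=C] mb])
  also have "\<dots> = C * infsum (\<lambda>\<alpha>. norm (coefX \<phi> \<alpha>)) UNIV" by (rule infsum_cmult_right) (use s1 in auto)
  also have "\<dots> \<le> C * (real CARD('d) * normX \<phi>)" by (rule mult_left_mono[OF sum_norm_le_normX[OF pc] C0])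
  finally show "normX (Mop N lam Z \<phi>) \<le> C * real CARD('d) * normX \<phi>" by simp
qed

theorem mainTheorem7:
  fixes \<rho> :: real and N :: nat
    and Z :: "(nat \<times> 'd::finite \<Rightarrow> complex) \<Rightarrow> complex ^ 'd"
    and lam :: "'m::finite \<Rightarrow> complex"
  assumes "\<rho> > 0"
    and "inA \<rho> ({..N} \<times> UNIV) Z"
    and "Z (\<lambda>_. 0) = 0"
    and "stable_nonresonant N Z lam"
    and "det (Bmat Z 0) \<noteq> 0"
  shows "(\<exists>L. is_DPhi0 (Phi N lam Z) L) \<and>
    (\<forall>L. is_DPhi0 (Phi N lam Z) L \<longrightarrow>
       (\<forall>P. inH P \<longrightarrow> inH (L P)) \<and>
       (\<exists>M. inverse_on_H L M \<and> (\<exists>C. \<forall>\<phi>. inH \<phi> \<longrightarrow> normX (M \<phi>) \<le> C * normX \<phi>)) \<and>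
       (\<forall>M. inverse_on_H L M \<longrightarrow>
          (\<forall>\<phi> \<alpha>. inH \<phi> \<longrightarrow> mdeg UNIV \<alpha> \<ge> 2 \<longrightarrow>
             coefX (M \<phi>) \<alpha> = matrix_inv (Tmat N Z (lampow lam \<alpha>)) *v coefX \<phi> \<alpha>)))"
proof -
  note rho = assms(1) and Z0 = assms(3) and B0 = assms(5)
  obtain cZ where repZ: "is_Arep \<rho> ({..N} \<times> UNIV) Z cZ" using assms(2) unfolding inA_def by blast
  have lam: "\<forall>k. cmod (lam k) < 1" using assms(4) unfolding stable_nonresonant_def by blast
  then have lam1: "\<forall>k. cmod (lam k) \<le> 1" by (simp add: less_imp_le)
  have dT: "det (Tmat N Z (lampow lam \<alpha>)) \<noteq> 0" if "2 \<le> mdeg UNIV \<alpha>" for \<alpha>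
    using assms(4) that unfolding stable_nonresonant_def charF_def by blast
  obtain C where C0: "0 \<le> C" and
    Cb: "\<forall>\<alpha> v. 2 \<le> mdeg UNIV \<alpha> \<longrightarrow> norm (matrix_inv (Tmat N Z (lampow lam \<alpha>)) *v v) \<le> C * norm v"
    using inverse_bound[OF lam B0 dT] by blast
  have deg_small: "\<not> 2 \<le> mdeg UNIV \<alpha> \<Longrightarrow> mdeg UNIV \<alpha> \<le> 1" for \<alpha> :: "'m \<Rightarrow> nat" by simp
  show ?thesis
  proof (intro conjI allI impI)
    show "\<exists>L. is_DPhi0 (Phi N lam Z) L" using Lop_DPhi0[OF rho repZ Z0 lam1] by blast
  next
    fix L assume dL: "is_DPhi0 (Phi N lam Z) L"
    note cL = coef_L[OF rho repZ Z0 lam1 dL]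
    note iL = inX_L[OF rho repZ Z0 lam1 dL]
    show "inH (L P)" if P: "inH P" for P
    proof -
      have Px: "inX P" using P by (simp add: inH_def)
      show ?thesis unfolding inH_def
        using iL[OF Px] cL[OF Px] P by (simp add: inH_def)
    qed
  next
    fix L assume dL: "is_DPhi0 (Phi N lam Z) L"
    note cL = coef_L[OF rho repZ Z0 lam1 dL]
    note iL = inX_L[OF rho repZ Z0 lam1 dL]
    note LE = L_eq[OF rho repZ Z0 lam1 dL]
    have Mx: "xrep (Mc N lam Z \<phi>) (Mop N lam Z \<phi>)" if "inX \<phi>" for \<phi>
      by (rule xrep_Mop(1)[OF C0 Cb that])
    have inv: "inverse_on_H L (Mop N lam Z)"
      unfolding inverse_on_H_def
    proof (intro conjI allI impI)
      fix \<phi> :: "('m \<Rightarrow> complex) \<Rightarrow> complex^'d" assume \<phi>: "inH \<phi>"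
      have \<phi>x: "inX \<phi>" using \<phi> by (simp add: inH_def)
      have cM: "coefX (Mop N lam Z \<phi>) = Mc N lam Z \<phi>" by (rule xrep_coefX[OF Mx[OF \<phi>x]])
      have MX: "inX (Mop N lam Z \<phi>)" by (rule xrep_inX[OF Mx[OF \<phi>x]])
      show "inH (Mop N lam Z \<phi>)" unfolding inH_def using MX cM by (auto simp: Mc_def)
      have "(\<lambda>\<alpha>. Tmat N Z (lampow lam \<alpha>) *v Mc N lam Z \<phi> \<alpha>) = coefX \<phi>"
      proof
        fix \<alpha> :: "'m \<Rightarrow> nat"
        show "Tmat N Z (lampow lam \<alpha>) *v Mc N lam Z \<phi> \<alpha> = coefX \<phi> \<alpha>"
        proof (cases "2 \<le> mdeg UNIV \<alpha>")
          case True then show ?thesis by (simp add: Mc_def matrix_inv_right[OF dT[OF True]])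
        next
          case False then show ?thesis using \<phi> by (simp add: Mc_def inH_def)
        qed
      qed
      then have "xrep (coefX \<phi>) (Lop N lam Z (Mop N lam Z \<phi>))"
        using xrep_Lop[OF lam1 Mx[OF \<phi>x], where N=N and Z=Z] by simp
      then have "eqX (Lop N lam Z (Mop N lam Z \<phi>)) \<phi>" by (rule xrep_eqX[OF _ xrep_coef[OF \<phi>x]])
      then show "eqX (L (Mop N lam Z \<phi>)) \<phi>" by (rule eqX_trans[OF LE[OF MX]])
    next
      fix P :: "('m \<Rightarrow> complex) \<Rightarrow> complex^'d" assume P: "inH P"
      have Px: "inX P" using P by (simp add: inH_def)
      have "Mc N lam Z (L P) = coefX P"
      proof
        fix \<alpha> :: "'m \<Rightarrow> nat"
        show "Mc N lam Z (L P) \<alpha> = coefX P \<alpha>"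
        proof (cases "2 \<le> mdeg UNIV \<alpha>")
          case True then show ?thesis by (simp add: Mc_def cL[OF Px] matrix_inv_left[OF dT[OF True]])
        next
          case False then show ?thesis using P by (simp add: Mc_def inH_def)
        qed
      qed
      then have "xrep (coefX P) (Mop N lam Z (L P))" using Mx[OF iL[OF Px]] by simp
      then show "eqX (Mop N lam Z (L P)) P" by (rule xrep_eqX[OF _ xrep_coef[OF Px]])
    qed
    have bnd: "\<forall>\<phi>. inH \<phi> \<longrightarrow> normX (Mop N lam Z \<phi>) \<le> (C * real CARD('d)) * normX \<phi>"
      using xrep_Mop(2)[OF C0 Cb] by (simp add: inH_def)
    show "\<exists>M. inverse_on_H L M \<and> (\<exists>C. \<forall>\<phi>. inH \<phi> \<longrightarrow> normX (M \<phi>) \<le> C * normX \<phi>)"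
      using inv bnd by blast
  next
    fix L M and \<phi> :: "('m \<Rightarrow> complex) \<Rightarrow> complex^'d" and \<alpha> :: "'m \<Rightarrow> nat"
    assume dL: "is_DPhi0 (Phi N lam Z) L" and iM: "inverse_on_H L M" and \<phi>: "inH \<phi>" and a2: "2 \<le> mdeg UNIV \<alpha>"
    note cL = coef_L[OF rho repZ Z0 lam1 dL]
    have Mh: "inH (M \<phi>)" and e: "eqX (L (M \<phi>)) \<phi>" using iM \<phi> unfolding inverse_on_H_def by auto
    have Mx: "inX (M \<phi>)" using Mh by (simp add: inH_def)
    have "coefX (L (M \<phi>)) = coefX \<phi>" by (rule eqX_coefX[OF e])
    then have "Tmat N Z (lampow lam \<alpha>) *v coefX (M \<phi>) \<alpha> = coefX \<phi> \<alpha>"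
      using cL[OF Mx] by (metis)
    then have "matrix_inv (Tmat N Z (lampow lam \<alpha>)) *v (Tmat N Z (lampow lam \<alpha>) *v coefX (M \<phi>) \<alpha>)
               = matrix_inv (Tmat N Z (lampow lam \<alpha>)) *v coefX \<phi> \<alpha>" by simp
    then show "coefX (M \<phi>) \<alpha> = matrix_inv (Tmat N Z (lampow lam \<alpha>)) *v coefX \<phi> \<alpha>"
      by (simp add: matrix_inv_left[OF dT[OF a2]])
  qed
qed

end
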